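(* Fix a nonabelian finite simple group $S$, a positive integer $t$ and a prime $p$, and set $N=S^t$. Assume that every coset of $S$ in $\mathrm{Aut}(S)$ contains an $S$-conjugacy class of $p$-elements of size at least $M$. Then $f_p(N)\ge M^t$.
   Context: For a subset $X$ of a finite group, $\mathrm{Ord}(X,p)$ is the set of elements of $X$ of $p$-power order. For $N=S^t$ with $S$ nonabelian simple, $f_p(N)=\min\{|\mathrm{Ord}(N\alpha,p)| : \alpha \in \mathrm{Aut}(N) \text{ a } p\text{-element}\}$, where $N$ is identified with $\mathrm{Inn}(N)\le\mathrm{Aut}(N)$ and $S$ with $\mathrm{Inn}(S)\le\mathrm{Aut}(S)$. *)

theory Defs
  imports "HOL-Algebra.Algebra"
begin

definition inn :: "('a, 'b) monoid_scheme \<Rightarrow> 'a \<Rightarrow> ('a \<Rightarrow> 'a)" where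
  "inn G g = (\<lambda>x\<in>carrier G. g \<otimes>\<^bsub>G\<^esub> x \<otimes>\<^bsub>G\<^esub> inv\<^bsub>G\<^esub> g)"

definition Inn :: "('a, 'b) monoid_scheme \<Rightarrow> ('a \<Rightarrow> 'a) set" where
  "Inn G = inn G ` carrier G"

definition p_element :: "('a, 'b) monoid_scheme \<Rightarrow> nat \<Rightarrow> 'a \<Rightarrow> bool" where
  "p_element G p x \<longleftrightarrow> x \<in> carrier G \<and> (\<exists>k::nat. group.ord G x = p ^ k)"

definition Ord_p :: "('a, 'b) monoid_scheme \<Rightarrow> 'a set \<Rightarrow> nat \<Rightarrow> 'a set" where
  "Ord_p G Y p = {x \<in> Y. p_element G p x}"

definition power_group :: "('a, 'b) monoid_scheme \<Rightarrow> nat \<Rightarrow> (nat \<Rightarrow> 'a) monoid" where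
  "power_group S t = product_group {..<t} (\<lambda>_. S)"

text \<open>f_p(N) = min |Ord_p(N alpha, p)| over p-elements alpha of Aut(N), N identified with Inn(N).\<close>
definition f_p :: "nat \<Rightarrow> (nat \<Rightarrow> 'a) monoid \<Rightarrow> nat" where
  "f_p p N = Min {card (Ord_p (AutoGroup N) (Inn N #>\<^bsub>AutoGroup N\<^esub> \<alpha>) p) | \<alpha>.
                    p_element (AutoGroup N) p \<alpha>}"

definition S_class :: "('a, 'b) monoid_scheme \<Rightarrow> ('a \<Rightarrow> 'a) \<Rightarrow> ('a \<Rightarrow> 'a) set" where
  "S_class S \<beta> = {inn S g \<otimes>\<^bsub>AutoGroup S\<^esub> \<beta> \<otimes>\<^bsub>AutoGroup S\<^esub> inv\<^bsub>AutoGroup S\<^esub> (inn S g) | g. g \<in> carrier S}"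

end

theory Submission
  imports Defs "HOL-Computational_Algebra.Primes"
begin
lemma p_element_of_pow:
  assumes "group G" "x \<in> carrier G" "Factorial_Ring.prime p" "x [^]\<^bsub>G\<^esub> (p^k::nat) = \<one>\<^bsub>G\<^esub>"
  shows "p_element G p x"
proof -
  interpret group G by fact
  have "ord x dvd p^k" using assms pow_eq_id by blast
  then obtain i where "ord x = p^i" using divides_primepow_nat[OF assms(3)] by blast
  thus ?thesis using assms unfolding p_element_def by blast
qed

lemma p_element_pow:
  assumes "group G" "p_element G p x"
  shows "\<exists>k. x [^]\<^bsub>G\<^esub> (p^k::nat) = \<one>\<^bsub>G\<^esub>"
proof -
  interpret group G by fact
  from assms(2) obtain k where "x \<in> carrier G" "ord x = p^k" unfolding p_element_def by blast
  thus ?thesis by (metis pow_ord_eq_1)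
qed

lemma Auto_carrier: "carrier (AutoGroup G) = auto G"
  by (simp add: AutoGroup_def BijGroup_def)

lemma Auto_mult: "f \<in> carrier (AutoGroup G) \<Longrightarrow> h \<in> carrier (AutoGroup G) \<Longrightarrow>
   f \<otimes>\<^bsub>AutoGroup G\<^esub> h = compose (carrier G) f h"
  by (simp add: AutoGroup_def BijGroup_def auto_def)

lemma Auto_one: "\<one>\<^bsub>AutoGroup G\<^esub> = (\<lambda>x\<in>carrier G. x)"
  by (simp add: AutoGroup_def BijGroup_def)

lemma Auto_mult_apply: "f \<in> carrier (AutoGroup G) \<Longrightarrow> h \<in> carrier (AutoGroup G) \<Longrightarrow> x \<in> carrier G \<Longrightarrow>
   (f \<otimes>\<^bsub>AutoGroup G\<^esub> h) x = f (h x)"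
  by (simp add: Auto_mult compose_eq)

lemma Auto_hom: "f \<in> carrier (AutoGroup G) \<Longrightarrow> f \<in> hom G G"
  by (simp add: Auto_carrier auto_def)
lemma Auto_ext: "f \<in> carrier (AutoGroup G) \<Longrightarrow> f \<in> extensional (carrier G)"
  by (simp add: Auto_carrier auto_def Bij_def)
lemma Auto_bij: "f \<in> carrier (AutoGroup G) \<Longrightarrow> bij_betw f (carrier G) (carrier G)"
  by (simp add: Auto_carrier auto_def Bij_def)
lemma Auto_closed: "f \<in> carrier (AutoGroup G) \<Longrightarrow> x \<in> carrier G \<Longrightarrow> f x \<in> carrier G"
  using Auto_hom[of f G] hom_in_carrier[of f G G x] by simp


context group begin

lemma cancel1: "x \<in> carrier G \<Longrightarrow> y \<in> carrier G \<Longrightarrow> inv x \<otimes> (x \<otimes> y) = y"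
  by (simp add: m_assoc[symmetric])
lemma cancel2: "x \<in> carrier G \<Longrightarrow> y \<in> carrier G \<Longrightarrow> x \<otimes> (inv x \<otimes> y) = y"
  by (simp add: m_assoc[symmetric])

lemma conj_pow: "g \<in> carrier G \<Longrightarrow> x \<in> carrier G \<Longrightarrow>
   (g \<otimes> x \<otimes> inv g) [^] (n::nat) = g \<otimes> x [^] n \<otimes> inv g"
  by (induct n) (simp_all add: m_assoc cancel1)

lemma conj_p_element: "g \<in> carrier G \<Longrightarrow> p_element G p x \<Longrightarrow> Factorial_Ring.prime p \<Longrightarrow>
   p_element G p (g \<otimes> x \<otimes> inv g)"
proof -
  assume a: "g \<in> carrier G" "p_element G p x" "Factorial_Ring.prime p"
  then obtain k where k: "x [^] (p^k::nat) = \<one>" using p_element_pow[OF is_group a(2)] by blast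
  have x: "x \<in> carrier G" using a unfolding p_element_def by blast
  have "(g \<otimes> x \<otimes> inv g) [^] (p^k::nat) = \<one>" using conj_pow[OF a(1) x] k a(1) x by simp
  then show ?thesis
    using p_element_of_pow[OF is_group _ a(3)] a(1) x by simp
qed

lemma unconj: "g \<in> carrier G \<Longrightarrow> x \<in> carrier G \<Longrightarrow> inv g \<otimes> (g \<otimes> x \<otimes> inv g) \<otimes> g = x"
  by (simp add: m_assoc cancel1)

lemma inn_apply: "x \<in> carrier G \<Longrightarrow> inn G g x = g \<otimes> x \<otimes> inv g"
  by (simp add: inn_def)

lemma inn_auto: assumes g: "g \<in> carrier G" shows "inn G g \<in> carrier (AutoGroup G)"
proof -
  have hom: "inn G g \<in> hom G G"
  proof (rule homI)
    fix x assume "x \<in> carrier G" thus "inn G g x \<in> carrier G" using g by (simp add: inn_apply)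
  next
    fix x y assume "x \<in> carrier G" "y \<in> carrier G"
    thus "inn G g (x \<otimes> y) = inn G g x \<otimes> inn G g y" using g by (simp add: inn_apply m_assoc cancel1)
  qed
  have inj: "inj_on (inn G g) (carrier G)"
  proof (rule inj_onI)
    fix x y assume xy: "x \<in> carrier G" "y \<in> carrier G" "inn G g x = inn G g y"
    hence "g \<otimes> x \<otimes> inv g = g \<otimes> y \<otimes> inv g" by (simp add: inn_apply)
    thus "x = y" using xy g unconj by metis
  qed
  have surj: "inn G g ` carrier G = carrier G"
  proof
    show "inn G g ` carrier G \<subseteq> carrier G" using g by (auto simp: inn_apply)
    show "carrier G \<subseteq> inn G g ` carrier G"
    proof
      fix y assume y: "y \<in> carrier G"
      have e: "y = inn G g (inv g \<otimes> y \<otimes> g)" using g y by (simp add: inn_apply m_assoc cancel2)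
      have c: "inv g \<otimes> y \<otimes> g \<in> carrier G" using g y by simp
      show "y \<in> inn G g ` carrier G" using e c by (rule image_eqI)
    qed
  qed
  have ext: "inn G g \<in> extensional (carrier G)" by (simp add: inn_def)
  have "inn G g \<in> Bij (carrier G)" unfolding Bij_def bij_betw_def using inj surj ext by blast
  thus ?thesis using hom by (simp add: Auto_carrier auto_def)
qed

end

locale setting =
  fixes S :: "'a monoid" (structure) and t :: nat
  assumes simple: "simple_group S" and finS: "finite (carrier S)" and ncomm: "\<not> comm_group S"
begin

sublocale simple_group S by (rule simple)

lemma comm_mult: "a \<in> carrier S \<Longrightarrow> u \<in> carrier S \<Longrightarrow> w \<in> carrier S \<Longrightarrow>
  a \<otimes> u = u \<otimes> a \<Longrightarrow> a \<otimes> w = w \<otimes> a \<Longrightarrow> a \<otimes> (u \<otimes> w) = (u \<otimes> w) \<otimes> a"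
proof -
  assume c: "a \<in> carrier S" "u \<in> carrier S" "w \<in> carrier S" and h: "a \<otimes> u = u \<otimes> a" "a \<otimes> w = w \<otimes> a"
  have "a \<otimes> (u \<otimes> w) = (a \<otimes> u) \<otimes> w" using c by (simp add: m_assoc)
  also have "\<dots> = u \<otimes> (a \<otimes> w)" using c h by (simp add: m_assoc)
  also have "\<dots> = (u \<otimes> w) \<otimes> a" using c h by (simp add: m_assoc)
  finally show ?thesis .
qed

lemma comm_inv: "a \<in> carrier S \<Longrightarrow> u \<in> carrier S \<Longrightarrow>
  a \<otimes> u = u \<otimes> a \<Longrightarrow> a \<otimes> inv u = inv u \<otimes> a"
proof -
  assume c: "a \<in> carrier S" "u \<in> carrier S" and h: "a \<otimes> u = u \<otimes> a"
  have "inv u \<otimes> a = inv u \<otimes> (a \<otimes> u) \<otimes> inv u" using c by (simp add: m_assoc)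
  also have "\<dots> = inv u \<otimes> (u \<otimes> a) \<otimes> inv u" using h by simp
  also have "\<dots> = a \<otimes> inv u" using c by (simp add: m_assoc cancel1)
  finally show ?thesis by simp
qed

lemma conj_mult: "g \<in> carrier S \<Longrightarrow> z \<in> carrier S \<Longrightarrow> w \<in> carrier S \<Longrightarrow>
  g \<otimes> (z \<otimes> w) \<otimes> inv g = (g \<otimes> z \<otimes> inv g) \<otimes> (g \<otimes> w \<otimes> inv g)"
  by (simp add: m_assoc cancel1)

lemma conj_inv: "g \<in> carrier S \<Longrightarrow> z \<in> carrier S \<Longrightarrow>
  g \<otimes> inv z \<otimes> inv g = inv (g \<otimes> z \<otimes> inv g)"
  by (simp add: inv_mult_group m_assoc)

lemma conj_conj: "g \<in> carrier S \<Longrightarrow> x \<in> carrier S \<Longrightarrow> h \<in> carrier S \<Longrightarrow>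
  g \<otimes> (x \<otimes> h \<otimes> inv x) \<otimes> inv g = (g \<otimes> x) \<otimes> h \<otimes> inv (g \<otimes> x)"
  by (simp add: inv_mult_group m_assoc)

definition Hset :: "'a \<Rightarrow> 'a set" where
  "Hset a = {z \<in> carrier S. \<forall>g\<in>carrier S. a \<otimes> (g \<otimes> z \<otimes> inv g) = (g \<otimes> z \<otimes> inv g) \<otimes> a}"

lemma Hset_normal: assumes a: "a \<in> carrier S" shows "Hset a \<lhd> S"
proof -
  have sub: "subgroup (Hset a) S"
  proof (rule subgroupI)
    show "Hset a \<subseteq> carrier S" by (auto simp: Hset_def)
    have "\<one> \<in> Hset a" using a by (simp add: Hset_def)
    thus "Hset a \<noteq> {}" by blast
  next
    fix z assume z: "z \<in> Hset a"
    hence zc: "z \<in> carrier S" by (simp add: Hset_def)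
    show "inv z \<in> Hset a" unfolding Hset_def
    proof (intro CollectI conjI ballI)
      show "inv z \<in> carrier S" using zc by simp
      fix g assume g: "g \<in> carrier S"
      have "a \<otimes> (g \<otimes> z \<otimes> inv g) = (g \<otimes> z \<otimes> inv g) \<otimes> a" using z g by (simp add: Hset_def)
      hence "a \<otimes> inv (g \<otimes> z \<otimes> inv g) = inv (g \<otimes> z \<otimes> inv g) \<otimes> a"
        using comm_inv[OF a, of "g \<otimes> z \<otimes> inv g"] g zc by simp
      thus "a \<otimes> (g \<otimes> inv z \<otimes> inv g) = (g \<otimes> inv z \<otimes> inv g) \<otimes> a"
        using conj_inv[OF g zc] by simp
    qed
  next
    fix z w assume z: "z \<in> Hset a" and w: "w \<in> Hset a"
    hence zc: "z \<in> carrier S" and wc: "w \<in> carrier S" by (simp_all add: Hset_def)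
    show "z \<otimes> w \<in> Hset a" unfolding Hset_def
    proof (intro CollectI conjI ballI)
      show "z \<otimes> w \<in> carrier S" using zc wc by simp
      fix g assume g: "g \<in> carrier S"
      have 1: "a \<otimes> (g \<otimes> z \<otimes> inv g) = (g \<otimes> z \<otimes> inv g) \<otimes> a" using z g by (simp add: Hset_def)
      have 2: "a \<otimes> (g \<otimes> w \<otimes> inv g) = (g \<otimes> w \<otimes> inv g) \<otimes> a" using w g by (simp add: Hset_def)
      show "a \<otimes> (g \<otimes> (z \<otimes> w) \<otimes> inv g) = (g \<otimes> (z \<otimes> w) \<otimes> inv g) \<otimes> a"
        using comm_mult[OF a _ _ 1 2] conj_mult[OF g zc wc] g zc wc by simp
    qed
  qed
  show ?thesis unfolding normal_inv_iff
  proof (intro conjI ballI sub)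
    fix x h assume x: "x \<in> carrier S" and h: "h \<in> Hset a"
    hence hc: "h \<in> carrier S" by (simp add: Hset_def)
    show "x \<otimes> h \<otimes> inv x \<in> Hset a" unfolding Hset_def
    proof (intro CollectI conjI ballI)
      show "x \<otimes> h \<otimes> inv x \<in> carrier S" using x hc by simp
      fix g assume g: "g \<in> carrier S"
      have "a \<otimes> ((g \<otimes> x) \<otimes> h \<otimes> inv (g \<otimes> x)) = ((g \<otimes> x) \<otimes> h \<otimes> inv (g \<otimes> x)) \<otimes> a"
        using h g x by (simp add: Hset_def)
      thus "a \<otimes> (g \<otimes> (x \<otimes> h \<otimes> inv x) \<otimes> inv g) = (g \<otimes> (x \<otimes> h \<otimes> inv x) \<otimes> inv g) \<otimes> a"
        using conj_conj[OF g x hc] by simp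
    qed
  qed
qed

lemma Hset_full: assumes a: "a \<in> carrier S" and z: "z \<in> Hset a" "z \<noteq> \<one>"
  shows "Hset a = carrier S"
  using no_real_normal_subgroup[OF Hset_normal[OF a]] z by blast

lemma Hset_comm: assumes a: "a \<in> carrier S" and z: "z \<in> Hset a" "z \<noteq> \<one>" and w: "w \<in> carrier S"
  shows "a \<otimes> w = w \<otimes> a"
proof -
  have "w \<in> Hset a" using Hset_full[OF a z] w by simp
  hence "a \<otimes> (\<one> \<otimes> w \<otimes> inv \<one>) = (\<one> \<otimes> w \<otimes> inv \<one>) \<otimes> a" unfolding Hset_def by blast
  thus ?thesis using w by simp
qed

lemma central_one: assumes a: "a \<in> carrier S" and c: "\<And>w. w \<in> carrier S \<Longrightarrow> a \<otimes> w = w \<otimes> a"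
  shows "a = \<one>"
proof (rule ccontr)
  assume na: "a \<noteq> \<one>"
  have "comm_group S"
  proof (rule group_comm_groupI)
    fix x y assume x: "x \<in> carrier S" and y: "y \<in> carrier S"
    have "a \<in> Hset x" unfolding Hset_def
    proof (intro CollectI conjI ballI a)
      fix g assume g: "g \<in> carrier S"
      have "g \<otimes> a \<otimes> inv g = a \<otimes> g \<otimes> inv g" using c[OF g] by simp
      also have "\<dots> = a" using a g by (simp add: m_assoc)
      finally show "x \<otimes> (g \<otimes> a \<otimes> inv g) = (g \<otimes> a \<otimes> inv g) \<otimes> x" using c[OF x] by simp
    qed
    thus "x \<otimes> y = y \<otimes> x" using Hset_comm[OF x _ na y] by simp
  qed
  thus False using ncomm by simp
qed

lemma key: assumes a: "a \<in> carrier S" "a \<noteq> \<one>" and b: "b \<in> carrier S" "b \<noteq> \<one>"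
  shows "\<exists>g\<in>carrier S. a \<otimes> (g \<otimes> b \<otimes> inv g) \<noteq> (g \<otimes> b \<otimes> inv g) \<otimes> a"
proof (rule ccontr)
  assume "\<not> ?thesis"
  hence "b \<in> Hset a" using b by (simp add: Hset_def)
  hence "\<And>w. w \<in> carrier S \<Longrightarrow> a \<otimes> w = w \<otimes> a" using Hset_comm[OF a(1) _ b(2)] by blast
  thus False using central_one[OF a(1)] a(2) by blast
qed

end

context setting begin

abbreviation "I \<equiv> {..<t}"
abbreviation "N \<equiv> power_group S t"

lemma carrN: "carrier N = (\<Pi>\<^sub>E i\<in>I. carrier S)" by (simp add: power_group_def)
lemma multN: "x \<otimes>\<^bsub>N\<^esub> y = (\<lambda>i\<in>I. x i \<otimes> y i)" by (simp add: power_group_def)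
lemma oneN: "\<one>\<^bsub>N\<^esub> = (\<lambda>i\<in>I. \<one>)" by (simp add: power_group_def)
lemma groupN: "group N" unfolding power_group_def by (rule product_group) (rule is_group)
lemma invN: "x \<in> carrier N \<Longrightarrow> inv\<^bsub>N\<^esub> x = (\<lambda>i\<in>I. inv (x i))"
  unfolding power_group_def by (simp add: is_group)
lemma memN: "x \<in> carrier N \<Longrightarrow> i \<in> I \<Longrightarrow> x i \<in> carrier S"
  by (auto simp: carrN)
lemma eqN: "x \<in> carrier N \<Longrightarrow> y \<in> carrier N \<Longrightarrow> (\<And>i. i \<in> I \<Longrightarrow> x i = y i) \<Longrightarrow> x = y"
  unfolding carrN by (rule PiE_ext)
lemma multN_apply: "i \<in> I \<Longrightarrow> (x \<otimes>\<^bsub>N\<^esub> y) i = x i \<otimes> y i" by (simp add: multN)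
lemma invN_apply: "x \<in> carrier N \<Longrightarrow> i \<in> I \<Longrightarrow> (inv\<^bsub>N\<^esub> x) i = inv (x i)" by (simp add: invN)
lemma oneN_apply: "i \<in> I \<Longrightarrow> \<one>\<^bsub>N\<^esub> i = \<one>" by (simp add: oneN)

definition e :: "nat \<Rightarrow> 'a \<Rightarrow> (nat \<Rightarrow> 'a)" where
  "e i s = (\<lambda>j\<in>I. if j = i then s else \<one>)"

lemma e_carr: "s \<in> carrier S \<Longrightarrow> e i s \<in> carrier N"
  by (auto simp: e_def carrN)
lemma e_apply: "j \<in> I \<Longrightarrow> e i s j = (if j = i then s else \<one>)" by (simp add: e_def)
lemma e_one: "e i \<one> = \<one>\<^bsub>N\<^esub>" by (simp add: e_def oneN)
lemma e_mult: "s \<in> carrier S \<Longrightarrow> s' \<in> carrier S \<Longrightarrow> e i s \<otimes>\<^bsub>N\<^esub> e i s' = e i (s \<otimes> s')"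
  by (rule eqN) (auto simp: e_carr groupN group.subgroup_self subgroup.m_closed multN_apply e_apply
       intro: monoid.m_closed[OF group.is_monoid[OF groupN]])

definition supp :: "(nat \<Rightarrow> 'a) \<Rightarrow> nat set" where
  "supp x = {j\<in>I. x j \<noteq> \<one>}"

lemma supp_e: "i \<in> I \<Longrightarrow> s \<noteq> \<one> \<Longrightarrow> supp (e i s) = {i}"
  by (auto simp: supp_def e_apply split: if_splits)

lemma supp_empty: "x \<in> carrier N \<Longrightarrow> supp x = {} \<longleftrightarrow> x = \<one>\<^bsub>N\<^esub>"
proof
  assume x: "x \<in> carrier N" and s: "supp x = {}"
  show "x = \<one>\<^bsub>N\<^esub>"
    by (rule eqN[OF x]) (use s in \<open>auto simp: supp_def oneN_apply monoid.one_closed[OF group.is_monoid[OF groupN]]\<close>)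
next
  assume "x = \<one>\<^bsub>N\<^esub>" thus "supp x = {}" by (auto simp: supp_def oneN_apply)
qed

definition R :: "(nat \<Rightarrow> 'a) \<Rightarrow> (nat \<Rightarrow> 'a) \<Rightarrow> bool" where
  "R x y \<longleftrightarrow> (\<forall>n\<in>carrier N. x \<otimes>\<^bsub>N\<^esub> (n \<otimes>\<^bsub>N\<^esub> y \<otimes>\<^bsub>N\<^esub> inv\<^bsub>N\<^esub> n) =
                  (n \<otimes>\<^bsub>N\<^esub> y \<otimes>\<^bsub>N\<^esub> inv\<^bsub>N\<^esub> n) \<otimes>\<^bsub>N\<^esub> x)"

lemma conjN_apply: "n \<in> carrier N \<Longrightarrow> i \<in> I \<Longrightarrow>
  (n \<otimes>\<^bsub>N\<^esub> y \<otimes>\<^bsub>N\<^esub> inv\<^bsub>N\<^esub> n) i = n i \<otimes> y i \<otimes> inv (n i)"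
  by (simp add: multN_apply invN_apply)

lemma R_iff: assumes x: "x \<in> carrier N" and y: "y \<in> carrier N"
  shows "R x y \<longleftrightarrow> supp x \<inter> supp y = {}"
proof
  assume r: "R x y"
  show "supp x \<inter> supp y = {}"
  proof (rule ccontr)
    assume "supp x \<inter> supp y \<noteq> {}"
    then obtain i where i: "i \<in> I" "x i \<noteq> \<one>" "y i \<noteq> \<one>" by (auto simp: supp_def)
    have xi: "x i \<in> carrier S" and yi: "y i \<in> carrier S" using memN x y i by auto
    obtain g where g: "g \<in> carrier S" "x i \<otimes> (g \<otimes> y i \<otimes> inv g) \<noteq> (g \<otimes> y i \<otimes> inv g) \<otimes> x i"
      using key[OF xi i(2) yi i(3)] by blast
    have n: "e i g \<in> carrier N" using e_carr[OF g(1)] .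
    have "x \<otimes>\<^bsub>N\<^esub> (e i g \<otimes>\<^bsub>N\<^esub> y \<otimes>\<^bsub>N\<^esub> inv\<^bsub>N\<^esub> e i g) =
          (e i g \<otimes>\<^bsub>N\<^esub> y \<otimes>\<^bsub>N\<^esub> inv\<^bsub>N\<^esub> e i g) \<otimes>\<^bsub>N\<^esub> x" using r n by (simp add: R_def)
    hence "(x \<otimes>\<^bsub>N\<^esub> (e i g \<otimes>\<^bsub>N\<^esub> y \<otimes>\<^bsub>N\<^esub> inv\<^bsub>N\<^esub> e i g)) i =
          ((e i g \<otimes>\<^bsub>N\<^esub> y \<otimes>\<^bsub>N\<^esub> inv\<^bsub>N\<^esub> e i g) \<otimes>\<^bsub>N\<^esub> x) i" by simp
    hence "x i \<otimes> (g \<otimes> y i \<otimes> inv g) = (g \<otimes> y i \<otimes> inv g) \<otimes> x i"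
      using i(1) n by (simp add: multN_apply invN_apply e_apply)
    thus False using g(2) by simp
  qed
next
  assume d: "supp x \<inter> supp y = {}"
  show "R x y" unfolding R_def
  proof
    fix n assume n: "n \<in> carrier N"
    interpret N: group N by (rule groupN)
    have c: "n \<otimes>\<^bsub>N\<^esub> y \<otimes>\<^bsub>N\<^esub> inv\<^bsub>N\<^esub> n \<in> carrier N" using n y by simp
    show "x \<otimes>\<^bsub>N\<^esub> (n \<otimes>\<^bsub>N\<^esub> y \<otimes>\<^bsub>N\<^esub> inv\<^bsub>N\<^esub> n) = (n \<otimes>\<^bsub>N\<^esub> y \<otimes>\<^bsub>N\<^esub> inv\<^bsub>N\<^esub> n) \<otimes>\<^bsub>N\<^esub> x"
    proof (rule eqN)
      show "x \<otimes>\<^bsub>N\<^esub> (n \<otimes>\<^bsub>N\<^esub> y \<otimes>\<^bsub>N\<^esub> inv\<^bsub>N\<^esub> n) \<in> carrier N" using c x by simp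
      show "(n \<otimes>\<^bsub>N\<^esub> y \<otimes>\<^bsub>N\<^esub> inv\<^bsub>N\<^esub> n) \<otimes>\<^bsub>N\<^esub> x \<in> carrier N" using c x by simp
      fix i assume i: "i \<in> I"
      have ni: "n i \<in> carrier S" and xi: "x i \<in> carrier S" and yi: "y i \<in> carrier S" using memN n x y i by auto
      have "x i = \<one> \<or> y i = \<one>" using d i by (auto simp: supp_def)
      thus "(x \<otimes>\<^bsub>N\<^esub> (n \<otimes>\<^bsub>N\<^esub> y \<otimes>\<^bsub>N\<^esub> inv\<^bsub>N\<^esub> n)) i = ((n \<otimes>\<^bsub>N\<^esub> y \<otimes>\<^bsub>N\<^esub> inv\<^bsub>N\<^esub> n) \<otimes>\<^bsub>N\<^esub> x) i"
        using i n ni xi yi by (auto simp add: multN_apply invN_apply)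
    qed
  qed
qed

end

context setting begin

abbreviation "A \<equiv> AutoGroup N"

lemma groupA: "group A" by (rule group.AutoGroup[OF groupN])

lemma auto_closed: "\<alpha> \<in> carrier A \<Longrightarrow> x \<in> carrier N \<Longrightarrow> \<alpha> x \<in> carrier N"
  by (rule Auto_closed)
lemma auto_mult: "\<alpha> \<in> carrier A \<Longrightarrow> x \<in> carrier N \<Longrightarrow> y \<in> carrier N \<Longrightarrow>
   \<alpha> (x \<otimes>\<^bsub>N\<^esub> y) = \<alpha> x \<otimes>\<^bsub>N\<^esub> \<alpha> y"
  using Auto_hom[of \<alpha> N] by (simp add: hom_mult)
lemma auto_ghom: "\<alpha> \<in> carrier A \<Longrightarrow> group_hom N N \<alpha>"
  unfolding group_hom_def group_hom_axioms_def using groupN Auto_hom[of \<alpha> N] by simp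
lemma auto_inv: "\<alpha> \<in> carrier A \<Longrightarrow> x \<in> carrier N \<Longrightarrow> \<alpha> (inv\<^bsub>N\<^esub> x) = inv\<^bsub>N\<^esub> (\<alpha> x)"
  using group_hom.hom_inv[OF auto_ghom] by blast
lemma auto_one: "\<alpha> \<in> carrier A \<Longrightarrow> \<alpha> \<one>\<^bsub>N\<^esub> = \<one>\<^bsub>N\<^esub>"
  using group_hom.hom_one[OF auto_ghom] by blast
lemma auto_inj: "\<alpha> \<in> carrier A \<Longrightarrow> x \<in> carrier N \<Longrightarrow> y \<in> carrier N \<Longrightarrow> \<alpha> x = \<alpha> y \<longleftrightarrow> x = y"
  using Auto_bij[of \<alpha> N] unfolding bij_betw_def inj_on_def by blast
lemma auto_surj: "\<alpha> \<in> carrier A \<Longrightarrow> y \<in> carrier N \<Longrightarrow> \<exists>x\<in>carrier N. \<alpha> x = y"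
  using Auto_bij[of \<alpha> N] unfolding bij_betw_def by (metis imageE)

lemma R_auto: assumes a: "\<alpha> \<in> carrier A" and x: "x \<in> carrier N" and y: "y \<in> carrier N"
  shows "R (\<alpha> x) (\<alpha> y) \<longleftrightarrow> R x y"
proof -
  interpret N: group N by (rule groupN)
  have eq: "(\<alpha> x \<otimes>\<^bsub>N\<^esub> (\<alpha> n \<otimes>\<^bsub>N\<^esub> \<alpha> y \<otimes>\<^bsub>N\<^esub> inv\<^bsub>N\<^esub> \<alpha> n) =
             (\<alpha> n \<otimes>\<^bsub>N\<^esub> \<alpha> y \<otimes>\<^bsub>N\<^esub> inv\<^bsub>N\<^esub> \<alpha> n) \<otimes>\<^bsub>N\<^esub> \<alpha> x) \<longleftrightarrow>
            (x \<otimes>\<^bsub>N\<^esub> (n \<otimes>\<^bsub>N\<^esub> y \<otimes>\<^bsub>N\<^esub> inv\<^bsub>N\<^esub> n) = (n \<otimes>\<^bsub>N\<^esub> y \<otimes>\<^bsub>N\<^esub> inv\<^bsub>N\<^esub> n) \<otimes>\<^bsub>N\<^esub> x)"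
    if n: "n \<in> carrier N" for n
  proof -
    have "\<alpha> (x \<otimes>\<^bsub>N\<^esub> (n \<otimes>\<^bsub>N\<^esub> y \<otimes>\<^bsub>N\<^esub> inv\<^bsub>N\<^esub> n)) =
          \<alpha> x \<otimes>\<^bsub>N\<^esub> (\<alpha> n \<otimes>\<^bsub>N\<^esub> \<alpha> y \<otimes>\<^bsub>N\<^esub> inv\<^bsub>N\<^esub> \<alpha> n)"
      using a x y n by (simp add: auto_mult auto_inv)
    moreover have "\<alpha> ((n \<otimes>\<^bsub>N\<^esub> y \<otimes>\<^bsub>N\<^esub> inv\<^bsub>N\<^esub> n) \<otimes>\<^bsub>N\<^esub> x) =
          (\<alpha> n \<otimes>\<^bsub>N\<^esub> \<alpha> y \<otimes>\<^bsub>N\<^esub> inv\<^bsub>N\<^esub> \<alpha> n) \<otimes>\<^bsub>N\<^esub> \<alpha> x"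
      using a x y n by (simp add: auto_mult auto_inv)
    ultimately show ?thesis using auto_inj[OF a] x y n by (metis N.m_closed N.inv_closed)
  qed
  show ?thesis
  proof
    assume r: "R (\<alpha> x) (\<alpha> y)"
    show "R x y" unfolding R_def
    proof
      fix n assume n: "n \<in> carrier N"
      have "\<alpha> n \<in> carrier N" using auto_closed[OF a n] .
      thus "x \<otimes>\<^bsub>N\<^esub> (n \<otimes>\<^bsub>N\<^esub> y \<otimes>\<^bsub>N\<^esub> inv\<^bsub>N\<^esub> n) = (n \<otimes>\<^bsub>N\<^esub> y \<otimes>\<^bsub>N\<^esub> inv\<^bsub>N\<^esub> n) \<otimes>\<^bsub>N\<^esub> x"
        using r eq[OF n] unfolding R_def by blast
    qed
  next
    assume r: "R x y"
    show "R (\<alpha> x) (\<alpha> y)" unfolding R_def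
    proof
      fix m assume m: "m \<in> carrier N"
      then obtain n where n: "n \<in> carrier N" "\<alpha> n = m" using auto_surj[OF a] by blast
      show "\<alpha> x \<otimes>\<^bsub>N\<^esub> (m \<otimes>\<^bsub>N\<^esub> \<alpha> y \<otimes>\<^bsub>N\<^esub> inv\<^bsub>N\<^esub> m) = (m \<otimes>\<^bsub>N\<^esub> \<alpha> y \<otimes>\<^bsub>N\<^esub> inv\<^bsub>N\<^esub> m) \<otimes>\<^bsub>N\<^esub> \<alpha> x"
        using r eq[OF n(1)] n(2) n(1) unfolding R_def by blast
    qed
  qed
qed

lemma disj_auto: "\<alpha> \<in> carrier A \<Longrightarrow> x \<in> carrier N \<Longrightarrow> y \<in> carrier N \<Longrightarrow>
   supp (\<alpha> x) \<inter> supp (\<alpha> y) = {} \<longleftrightarrow> supp x \<inter> supp y = {}"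
  using R_auto[of \<alpha> x y] R_iff[of x y] R_iff[of "\<alpha> x" "\<alpha> y"] auto_closed by simp

definition s0 :: 'a where "s0 = (SOME s. s \<in> carrier S \<and> s \<noteq> \<one>)"

lemma s0: "s0 \<in> carrier S" "s0 \<noteq> \<one>"
proof -
  have "\<exists>s. s \<in> carrier S \<and> s \<noteq> \<one>" using simple_not_triv one_closed by blast
  hence "s0 \<in> carrier S \<and> s0 \<noteq> \<one>" unfolding s0_def by (rule someI_ex)
  thus "s0 \<in> carrier S" "s0 \<noteq> \<one>" by auto
qed

lemma supp_sub: "supp x \<subseteq> I" by (auto simp: supp_def)

lemma single: assumes a: "\<alpha> \<in> carrier A" and x: "x \<in> carrier N" and sx: "supp x = {i}"
  shows "\<exists>j. supp (\<alpha> x) = {j}"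
proof -
  have "x \<noteq> \<one>\<^bsub>N\<^esub>" using supp_empty[OF x] sx by auto
  hence "\<alpha> x \<noteq> \<one>\<^bsub>N\<^esub>" using auto_inj[OF a x] auto_one[OF a]
    by (metis monoid.one_closed[OF group.is_monoid[OF groupN]])
  hence "supp (\<alpha> x) \<noteq> {}" using supp_empty[OF auto_closed[OF a x]] by simp
  then obtain j where j: "j \<in> supp (\<alpha> x)" by blast
  have "supp (\<alpha> x) = {j}"
  proof (rule ccontr)
    assume "supp (\<alpha> x) \<noteq> {j}"
    then obtain k where k: "k \<in> supp (\<alpha> x)" "k \<noteq> j" using j by blast
    have jI: "j \<in> I" and kI: "k \<in> I" using j k supp_sub by auto
    obtain u where u: "u \<in> carrier N" "\<alpha> u = e j s0" using auto_surj[OF a e_carr[OF s0(1)]] by blast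
    obtain v where v: "v \<in> carrier N" "\<alpha> v = e k s0" using auto_surj[OF a e_carr[OF s0(1)]] by blast
    have "supp (\<alpha> u) \<inter> supp (\<alpha> v) = {}" using u v supp_e[OF jI s0(2)] supp_e[OF kI s0(2)] k by simp
    hence uv: "supp u \<inter> supp v = {}" using disj_auto[OF a u(1) v(1)] by simp
    have "supp (\<alpha> u) \<inter> supp (\<alpha> x) \<noteq> {}" using u supp_e[OF jI s0(2)] j by simp
    hence "supp u \<inter> supp x \<noteq> {}" using disj_auto[OF a u(1) x] by simp
    hence "i \<in> supp u" using sx by auto
    moreover have "supp (\<alpha> v) \<inter> supp (\<alpha> x) \<noteq> {}" using v supp_e[OF kI s0(2)] k by simp
    hence "supp v \<inter> supp x \<noteq> {}" using disj_auto[OF a v(1) x] by simp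
    hence "i \<in> supp v" using sx by auto
    ultimately show False using uv by blast
  qed
  thus ?thesis by blast
qed

definition pi :: "((nat \<Rightarrow> 'a) \<Rightarrow> (nat \<Rightarrow> 'a)) \<Rightarrow> nat \<Rightarrow> nat" where
  "pi \<alpha> i = (THE j. supp (\<alpha> (e i s0)) = {j})"

lemma pi_supp: assumes a: "\<alpha> \<in> carrier A" and i: "i \<in> I" shows "supp (\<alpha> (e i s0)) = {pi \<alpha> i}"
proof -
  obtain j where j: "supp (\<alpha> (e i s0)) = {j}"
    using single[OF a e_carr[OF s0(1)] supp_e[OF i s0(2)]] by blast
  have "pi \<alpha> i = j" unfolding pi_def using j by (rule the_equality) (use j in auto)
  thus ?thesis using j by simp
qed

lemma pi_in: "\<alpha> \<in> carrier A \<Longrightarrow> i \<in> I \<Longrightarrow> pi \<alpha> i \<in> I"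
  using pi_supp supp_sub by blast

lemma pi_supp_s: assumes a: "\<alpha> \<in> carrier A" and i: "i \<in> I" and s: "s \<in> carrier S" "s \<noteq> \<one>"
  shows "supp (\<alpha> (e i s)) = {pi \<alpha> i}"
proof -
  obtain j where j: "supp (\<alpha> (e i s)) = {j}"
    using single[OF a e_carr[OF s(1)] supp_e[OF i s(2)]] by blast
  have "supp (e i s) \<inter> supp (e i s0) \<noteq> {}" using supp_e[OF i s(2)] supp_e[OF i s0(2)] by simp
  hence "supp (\<alpha> (e i s)) \<inter> supp (\<alpha> (e i s0)) \<noteq> {}"
    using disj_auto[OF a e_carr[OF s(1)] e_carr[OF s0(1)]] by simp
  thus ?thesis using j pi_supp[OF a i] by auto
qed

lemma pi_inj: assumes a: "\<alpha> \<in> carrier A" shows "inj_on (pi \<alpha>) I"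
proof (rule inj_onI)
  fix i i' assume i: "i \<in> I" and i': "i' \<in> I" and eq: "pi \<alpha> i = pi \<alpha> i'"
  have "supp (\<alpha> (e i s0)) \<inter> supp (\<alpha> (e i' s0)) \<noteq> {}" using pi_supp[OF a i] pi_supp[OF a i'] eq by simp
  hence "supp (e i s0) \<inter> supp (e i' s0) \<noteq> {}"
    using disj_auto[OF a e_carr[OF s0(1)] e_carr[OF s0(1)]] by simp
  thus "i = i'" using supp_e[OF i s0(2)] supp_e[OF i' s0(2)] by simp
qed

lemma pi_bij: assumes a: "\<alpha> \<in> carrier A" shows "bij_betw (pi \<alpha>) I I"
proof -
  have "pi \<alpha> ` I \<subseteq> I" using pi_in[OF a] by blast
  hence "pi \<alpha> ` I = I" using endo_inj_surj[OF _ _ pi_inj[OF a]] by blast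
  thus ?thesis using pi_inj[OF a] by (simp add: bij_betw_def)
qed

lemma e_other: assumes a: "\<alpha> \<in> carrier A" and i: "i \<in> I" and s: "s \<in> carrier S" and j: "j \<in> I" "j \<noteq> pi \<alpha> i"
  shows "\<alpha> (e i s) j = \<one>"
proof (cases "s = \<one>")
  case True
  thus ?thesis using auto_one[OF a] j by (simp add: e_one oneN_apply)
next
  case False
  thus ?thesis using pi_supp_s[OF a i s False] j by (auto simp: supp_def)
qed

lemma coord: assumes a: "\<alpha> \<in> carrier A" and x: "x \<in> carrier N" and i: "i \<in> I"
  shows "\<alpha> x (pi \<alpha> i) = \<alpha> (e i (x i)) (pi \<alpha> i)"
proof -
  interpret N: group N by (rule groupN)
  define x' where "x' = (\<lambda>j\<in>I. if j = i then \<one> else x j)"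
  have x'c: "x' \<in> carrier N" unfolding carrN x'_def
    by (rule PiE_I) (auto simp: memN[OF x])
  have xi: "x i \<in> carrier S" using memN[OF x i] .
  have dec: "x = e i (x i) \<otimes>\<^bsub>N\<^esub> x'"
  proof (rule eqN[OF x])
    show "e i (x i) \<otimes>\<^bsub>N\<^esub> x' \<in> carrier N"
      using e_carr[OF xi] x'c by simp
    fix j assume j: "j \<in> I"
    show "x j = (e i (x i) \<otimes>\<^bsub>N\<^esub> x') j" using j memN[OF x j] xi by (simp add: multN_apply e_apply x'_def)
  qed
  have "supp x' \<inter> supp (e i s0) = {}" using supp_e[OF i s0(2)] by (auto simp: supp_def x'_def)
  hence "supp (\<alpha> x') \<inter> supp (\<alpha> (e i s0)) = {}" using disj_auto[OF a x'c e_carr[OF s0(1)]] by simp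
  hence "\<alpha> x' (pi \<alpha> i) = \<one>" using pi_supp[OF a i] pi_in[OF a i] by (auto simp: supp_def)
  moreover have "\<alpha> x = \<alpha> (e i (x i)) \<otimes>\<^bsub>N\<^esub> \<alpha> x'"
    using auto_mult[OF a e_carr[OF xi] x'c] by (metis dec)
  moreover have "\<alpha> (e i (x i)) (pi \<alpha> i) \<in> carrier S"
    using memN[OF auto_closed[OF a e_carr[OF xi]] pi_in[OF a i]] .
  ultimately show ?thesis using pi_in[OF a i] by (simp add: multN_apply)
qed

definition phi :: "((nat \<Rightarrow> 'a) \<Rightarrow> (nat \<Rightarrow> 'a)) \<Rightarrow> nat \<Rightarrow> 'a \<Rightarrow> 'a" where
  "phi \<alpha> i = (\<lambda>s\<in>carrier S. \<alpha> (e i s) (pi \<alpha> i))"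

lemma alpha_formula: "\<alpha> \<in> carrier A \<Longrightarrow> x \<in> carrier N \<Longrightarrow> i \<in> I \<Longrightarrow> \<alpha> x (pi \<alpha> i) = phi \<alpha> i (x i)"
  using coord memN by (simp add: phi_def)

lemma phi_auto: assumes a: "\<alpha> \<in> carrier A" and i: "i \<in> I" shows "phi \<alpha> i \<in> carrier (AutoGroup S)"
proof -
  have pI: "pi \<alpha> i \<in> I" using pi_in[OF a i] .
  have closed: "phi \<alpha> i s \<in> carrier S" if s: "s \<in> carrier S" for s
    using memN[OF auto_closed[OF a e_carr[OF s]] pI] s by (simp add: phi_def)
  have hom: "phi \<alpha> i \<in> hom S S"
  proof (rule homI)
    fix s assume "s \<in> carrier S" thus "phi \<alpha> i s \<in> carrier S" by (rule closed)
  next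
    fix s s' assume s: "s \<in> carrier S" and s': "s' \<in> carrier S"
    have "\<alpha> (e i (s \<otimes> s')) = \<alpha> (e i s) \<otimes>\<^bsub>N\<^esub> \<alpha> (e i s')"
      using auto_mult[OF a e_carr[of s i] e_carr[of s' i]] e_mult[OF s s', of i] s s' by simp
    thus "phi \<alpha> i (s \<otimes> s') = phi \<alpha> i s \<otimes> phi \<alpha> i s'"
      using s s' pI by (simp add: phi_def multN_apply)
  qed
  have inj: "inj_on (phi \<alpha> i) (carrier S)"
  proof (rule inj_onI)
    fix s s' assume s: "s \<in> carrier S" and s': "s' \<in> carrier S" and eq: "phi \<alpha> i s = phi \<alpha> i s'"
    have "\<alpha> (e i s) = \<alpha> (e i s')"
    proof (rule eqN[OF auto_closed[OF a e_carr[OF s]] auto_closed[OF a e_carr[OF s']]])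
      fix j assume j: "j \<in> I"
      show "\<alpha> (e i s) j = \<alpha> (e i s') j"
      proof (cases "j = pi \<alpha> i")
        case True thus ?thesis using eq s s' by (simp add: phi_def)
      next
        case False thus ?thesis using e_other[OF a i s j] e_other[OF a i s' j] by simp
      qed
    qed
    hence "e i s = e i s'" using auto_inj[OF a e_carr[OF s] e_carr[OF s']] by simp
    hence "e i s i = e i s' i" by simp
    thus "s = s'" using i by (simp add: e_apply)
  qed
  have sur: "phi \<alpha> i ` carrier S = carrier S"
    using endo_inj_surj[OF finS _ inj] closed by blast
  have ext: "phi \<alpha> i \<in> extensional (carrier S)" by (simp add: phi_def)
  have "phi \<alpha> i \<in> Bij (carrier S)" unfolding Bij_def bij_betw_def using inj sur ext by blast
  thus ?thesis using hom by (simp add: Auto_carrier auto_def)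
qed

end

context setting begin

abbreviation "AS \<equiv> AutoGroup S"

lemma groupAS: "group AS" by (rule AutoGroup)
lemmas AS_monoid = group.is_monoid[OF groupAS]
lemmas AS_one_closed = monoid.one_closed[OF AS_monoid]
lemmas AS_m_closed = monoid.m_closed[OF AS_monoid]
lemmas AS_r_one = monoid.r_one[OF AS_monoid]
lemmas AS_m_assoc = monoid.m_assoc[OF AS_monoid]
lemmas A_monoid = group.is_monoid[OF groupA]
lemmas A_pow_closed = monoid.nat_pow_closed[OF A_monoid]

lemma AS_one_iff: assumes f: "f \<in> carrier AS" and s: "s \<in> carrier S" shows "f s = \<one> \<longleftrightarrow> s = \<one>"
proof -
  have gh: "group_hom S S f" unfolding group_hom_def group_hom_axioms_def using is_group Auto_hom[OF f] by simp
  have "f \<one> = \<one>" using group_hom.hom_one[OF gh] by simp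
  moreover have "inj_on f (carrier S)" using Auto_bij[OF f] by (simp add: bij_betw_def)
  ultimately show ?thesis using s by (metis inj_onD one_closed)
qed

primrec Phi :: "(nat \<Rightarrow> 'a \<Rightarrow> 'a) \<Rightarrow> (nat \<Rightarrow> nat) \<Rightarrow> nat \<Rightarrow> nat \<Rightarrow> 'a \<Rightarrow> 'a" where
  "Phi \<psi> \<sigma> 0 j = \<one>\<^bsub>AS\<^esub>"
| "Phi \<psi> \<sigma> (Suc k) j = Phi \<psi> \<sigma> k j \<otimes>\<^bsub>AS\<^esub> \<psi> ((\<sigma>^^k) j)"

lemma funpow_in: "\<sigma> ` I \<subseteq> I \<Longrightarrow> j \<in> I \<Longrightarrow> (\<sigma>^^k) j \<in> I"
  by (induct k) auto

lemma Phi_closed: assumes s: "\<sigma> ` I \<subseteq> I" and p: "\<And>j. j \<in> I \<Longrightarrow> \<psi> j \<in> carrier AS" and j: "j \<in> I"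
  shows "Phi \<psi> \<sigma> k j \<in> carrier AS"
proof (induct k)
  case 0 show ?case using AS_one_closed by simp
next
  case (Suc k) thus ?case using p[OF funpow_in[OF s j]] AS_m_closed by simp
qed

lemma Phi_add: assumes s: "\<sigma> ` I \<subseteq> I" and p: "\<And>j. j \<in> I \<Longrightarrow> \<psi> j \<in> carrier AS" and j: "j \<in> I"
  shows "Phi \<psi> \<sigma> (a + b) j = Phi \<psi> \<sigma> a j \<otimes>\<^bsub>AS\<^esub> Phi \<psi> \<sigma> b ((\<sigma>^^a) j)"
proof (induct b)
  case 0 show ?case using AS_r_one[OF Phi_closed[OF s p j]] by simp
next
  case (Suc b)
  have "(\<sigma>^^(a+b)) j = (\<sigma>^^b) ((\<sigma>^^a) j)" by (simp add: funpow_add add.commute[of a b])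
  moreover have "Phi \<psi> \<sigma> a j \<otimes>\<^bsub>AS\<^esub> Phi \<psi> \<sigma> b ((\<sigma>^^a) j) \<otimes>\<^bsub>AS\<^esub> \<psi> ((\<sigma>^^b) ((\<sigma>^^a) j)) =
      Phi \<psi> \<sigma> a j \<otimes>\<^bsub>AS\<^esub> (Phi \<psi> \<sigma> b ((\<sigma>^^a) j) \<otimes>\<^bsub>AS\<^esub> \<psi> ((\<sigma>^^b) ((\<sigma>^^a) j)))"
    using AS_m_assoc[OF Phi_closed[OF s p j] Phi_closed[OF s p funpow_in[OF s j]]
        p[OF funpow_in[OF s funpow_in[OF s j]]]] .
  ultimately show ?case using Suc by simp
qed

lemma funpow_mult_fix: "(\<sigma>^^m) r = r \<Longrightarrow> (\<sigma>^^(k*m)) r = r"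
proof (induct k)
  case 0 thus ?case by simp
next
  case (Suc k)
  have "(\<sigma>^^(Suc k * m)) r = (\<sigma>^^(k*m + m)) r" by (simp add: add.commute)
  also have "\<dots> = (\<sigma>^^(k*m)) ((\<sigma>^^m) r)" by (simp add: funpow_add)
  finally show ?case using Suc by simp
qed

lemma Phi_mult: assumes s: "\<sigma> ` I \<subseteq> I" and p: "\<And>j. j \<in> I \<Longrightarrow> \<psi> j \<in> carrier AS" and r: "r \<in> I"
  and per: "(\<sigma>^^m) r = r"
  shows "Phi \<psi> \<sigma> (k * m) r = (Phi \<psi> \<sigma> m r) [^]\<^bsub>AS\<^esub> k"
proof (induct k)
  case 0 thus ?case by simp
next
  case (Suc k)
  have "Phi \<psi> \<sigma> (Suc k * m) r = Phi \<psi> \<sigma> (k * m + m) r" by (simp add: add.commute)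
  also have "\<dots> = Phi \<psi> \<sigma> (k * m) r \<otimes>\<^bsub>AS\<^esub> Phi \<psi> \<sigma> m r"
    using Phi_add[OF s p r, where a="k*m" and b=m] funpow_mult_fix[OF per, of k] by simp
  finally show ?case using Suc by simp
qed

definition Gam :: "(nat \<Rightarrow> 'a \<Rightarrow> 'a) \<Rightarrow> (nat \<Rightarrow> nat) \<Rightarrow> (nat \<Rightarrow> 'a) \<Rightarrow> (nat \<Rightarrow> 'a)" where
  "Gam \<psi> \<sigma> = (\<lambda>x\<in>carrier N. \<lambda>j\<in>I. \<psi> j (x (\<sigma> j)))"

lemma Gam_pow: assumes s: "\<sigma> ` I \<subseteq> I" and p: "\<And>j. j \<in> I \<Longrightarrow> \<psi> j \<in> carrier AS"
  and G: "Gam \<psi> \<sigma> \<in> carrier A"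
  shows "Gam \<psi> \<sigma> [^]\<^bsub>A\<^esub> k = (\<lambda>x\<in>carrier N. \<lambda>j\<in>I. Phi \<psi> \<sigma> k j (x ((\<sigma>^^k) j)))"
proof (induct k)
  case 0
  show ?case
  proof (rule ext)
    fix x
    show "(Gam \<psi> \<sigma> [^]\<^bsub>A\<^esub> (0::nat)) x = (\<lambda>x\<in>carrier N. \<lambda>j\<in>I. Phi \<psi> \<sigma> 0 j (x ((\<sigma>^^0) j))) x"
    proof (cases "x \<in> carrier N")
      case True
      have "(\<lambda>j\<in>I. Phi \<psi> \<sigma> 0 j (x ((\<sigma>^^0) j))) = (\<lambda>j\<in>I. x j)"
        using memN[OF True] by (auto simp: Auto_one)
      also have "\<dots> = x" using True by (simp add: carrN PiE_restrict)
      finally show ?thesis using True by (simp add: Auto_one)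
    next
      case False thus ?thesis by (simp add: Auto_one)
    qed
  qed
next
  case (Suc k)
  have Gk: "Gam \<psi> \<sigma> [^]\<^bsub>A\<^esub> k \<in> carrier A" using A_pow_closed[OF G] .
  have "Gam \<psi> \<sigma> [^]\<^bsub>A\<^esub> Suc k = Gam \<psi> \<sigma> [^]\<^bsub>A\<^esub> k \<otimes>\<^bsub>A\<^esub> Gam \<psi> \<sigma>" by simp
  also have "\<dots> = compose (carrier N) (Gam \<psi> \<sigma> [^]\<^bsub>A\<^esub> k) (Gam \<psi> \<sigma>)" using Auto_mult[OF Gk G] .
  also have "\<dots> = (\<lambda>x\<in>carrier N. \<lambda>j\<in>I. Phi \<psi> \<sigma> (Suc k) j (x ((\<sigma>^^Suc k) j)))"
  proof (rule ext)
    fix x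
    show "compose (carrier N) (Gam \<psi> \<sigma> [^]\<^bsub>A\<^esub> k) (Gam \<psi> \<sigma>) x =
          (\<lambda>x\<in>carrier N. \<lambda>j\<in>I. Phi \<psi> \<sigma> (Suc k) j (x ((\<sigma>^^Suc k) j))) x"
    proof (cases "x \<in> carrier N")
      case True
      have Gx: "Gam \<psi> \<sigma> x \<in> carrier N" using Auto_closed[OF G True] .
      have "compose (carrier N) (Gam \<psi> \<sigma> [^]\<^bsub>A\<^esub> k) (Gam \<psi> \<sigma>) x = (Gam \<psi> \<sigma> [^]\<^bsub>A\<^esub> k) (Gam \<psi> \<sigma> x)"
        using True by (simp add: compose_eq)
      also have "\<dots> = (\<lambda>j\<in>I. Phi \<psi> \<sigma> k j (Gam \<psi> \<sigma> x ((\<sigma>^^k) j)))" using Suc Gx by (simp add: restrict_def)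
      also have "\<dots> = (\<lambda>j\<in>I. Phi \<psi> \<sigma> (Suc k) j (x ((\<sigma>^^Suc k) j)))"
      proof (rule restrict_ext)
        fix j assume j: "j \<in> I"
        have kj: "(\<sigma>^^k) j \<in> I" using funpow_in[OF s j] .
        have xs: "x (\<sigma> ((\<sigma>^^k) j)) \<in> carrier S" using memN[OF True] s kj by blast
        have "Gam \<psi> \<sigma> x ((\<sigma>^^k) j) = \<psi> ((\<sigma>^^k) j) (x (\<sigma> ((\<sigma>^^k) j)))"
          using True kj by (simp add: Gam_def)
        moreover have "Phi \<psi> \<sigma> (Suc k) j (x ((\<sigma>^^Suc k) j)) =
             Phi \<psi> \<sigma> k j (\<psi> ((\<sigma>^^k) j) (x (\<sigma> ((\<sigma>^^k) j))))"
          using Auto_mult_apply[OF Phi_closed[OF s p j] p[OF kj] xs] by simp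
        ultimately show "Phi \<psi> \<sigma> k j (Gam \<psi> \<sigma> x ((\<sigma>^^k) j)) = Phi \<psi> \<sigma> (Suc k) j (x ((\<sigma>^^Suc k) j))"
          by simp
      qed
      finally show ?thesis using True by simp
    next
      case False thus ?thesis by (simp add: compose_def)
    qed
  qed
  finally show ?case .
qed

lemma Gam_one: assumes s: "\<sigma> ` I \<subseteq> I" and p: "\<And>j. j \<in> I \<Longrightarrow> \<psi> j \<in> carrier AS"
  and G: "Gam \<psi> \<sigma> \<in> carrier A"
  and ph: "\<And>j. j \<in> I \<Longrightarrow> Phi \<psi> \<sigma> k j = \<one>\<^bsub>AS\<^esub>" and per: "\<And>j. j \<in> I \<Longrightarrow> (\<sigma>^^k) j = j"
  shows "Gam \<psi> \<sigma> [^]\<^bsub>A\<^esub> k = \<one>\<^bsub>A\<^esub>"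
proof -
  have "(\<lambda>x\<in>carrier N. \<lambda>j\<in>I. Phi \<psi> \<sigma> k j (x ((\<sigma>^^k) j))) = (\<lambda>x\<in>carrier N. x)"
  proof (rule restrict_ext)
    fix x assume x: "x \<in> carrier N"
    have "(\<lambda>j\<in>I. Phi \<psi> \<sigma> k j (x ((\<sigma>^^k) j))) = (\<lambda>j\<in>I. x j)"
      using memN[OF x] by (auto simp: ph per Auto_one)
    also have "\<dots> = x" using x by (simp add: carrN PiE_restrict)
    finally show "(\<lambda>j\<in>I. Phi \<psi> \<sigma> k j (x ((\<sigma>^^k) j))) = x" .
  qed
  thus ?thesis using Gam_pow[OF s p G, of k] by (simp add: Auto_one)
qed

end

context setting begin

definition sig :: "((nat \<Rightarrow> 'a) \<Rightarrow> (nat \<Rightarrow> 'a)) \<Rightarrow> nat \<Rightarrow> nat" where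
  "sig \<alpha> = inv_into I (pi \<alpha>)"

lemma sig_in: "\<alpha> \<in> carrier A \<Longrightarrow> j \<in> I \<Longrightarrow> sig \<alpha> j \<in> I"
  unfolding sig_def using pi_bij bij_betw_inv_into bij_betwE by metis
lemma pi_sig: "\<alpha> \<in> carrier A \<Longrightarrow> j \<in> I \<Longrightarrow> pi \<alpha> (sig \<alpha> j) = j"
  unfolding sig_def using pi_bij bij_betw_inv_into_right by metis
lemma sig_img: "\<alpha> \<in> carrier A \<Longrightarrow> sig \<alpha> ` I \<subseteq> I"
  using sig_in by blast

definition psiA :: "((nat \<Rightarrow> 'a) \<Rightarrow> (nat \<Rightarrow> 'a)) \<Rightarrow> nat \<Rightarrow> 'a \<Rightarrow> 'a" where
  "psiA \<alpha> j = phi \<alpha> (sig \<alpha> j)"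

lemma psiA_in: "\<alpha> \<in> carrier A \<Longrightarrow> j \<in> I \<Longrightarrow> psiA \<alpha> j \<in> carrier AS"
  unfolding psiA_def using phi_auto sig_in by blast

lemma alpha_Gam: assumes a: "\<alpha> \<in> carrier A" shows "\<alpha> = Gam (psiA \<alpha>) (sig \<alpha>)"
proof (rule ext)
  fix x
  show "\<alpha> x = Gam (psiA \<alpha>) (sig \<alpha>) x"
  proof (cases "x \<in> carrier N")
    case True
    show ?thesis
    proof (rule ext)
      fix j
      show "\<alpha> x j = Gam (psiA \<alpha>) (sig \<alpha>) x j"
      proof (cases "j \<in> I")
        case True
        have "\<alpha> x j = \<alpha> x (pi \<alpha> (sig \<alpha> j))" using pi_sig[OF a True] by simp
        also have "\<dots> = phi \<alpha> (sig \<alpha> j) (x (sig \<alpha> j))"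
          using alpha_formula[OF a \<open>x \<in> carrier N\<close> sig_in[OF a True]] .
        finally show ?thesis using True \<open>x \<in> carrier N\<close> by (simp add: Gam_def psiA_def)
      next
        case False
        have "\<alpha> x \<in> carrier N" using auto_closed[OF a True] .
        hence "\<alpha> x j = undefined" using False by (simp add: carrN PiE_def extensional_def)
        thus ?thesis using False True by (simp add: Gam_def)
      qed
    qed
  next
    case False
    have "\<alpha> \<in> extensional (carrier N)" using Auto_ext[OF a] .
    hence "\<alpha> x = undefined" using False by (simp add: extensional_def)
    thus ?thesis using False by (simp add: Gam_def)
  qed
qed

definition gam :: "((nat \<Rightarrow> 'a) \<Rightarrow> (nat \<Rightarrow> 'a)) \<Rightarrow> (nat \<Rightarrow> 'a) \<Rightarrow> ((nat \<Rightarrow> 'a) \<Rightarrow> (nat \<Rightarrow> 'a))" where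
  "gam \<alpha> n = inn N n \<otimes>\<^bsub>A\<^esub> \<alpha>"

definition psiN :: "((nat \<Rightarrow> 'a) \<Rightarrow> (nat \<Rightarrow> 'a)) \<Rightarrow> (nat \<Rightarrow> 'a) \<Rightarrow> nat \<Rightarrow> 'a \<Rightarrow> 'a" where
  "psiN \<alpha> n j = inn S (n j) \<otimes>\<^bsub>AS\<^esub> phi \<alpha> (sig \<alpha> j)"

lemma psiN_in: "\<alpha> \<in> carrier A \<Longrightarrow> n j \<in> carrier S \<Longrightarrow> j \<in> I \<Longrightarrow> psiN \<alpha> n j \<in> carrier AS"
  unfolding psiN_def using phi_auto sig_in inn_auto AS_m_closed by blast

lemma innN_in: "n \<in> carrier N \<Longrightarrow> inn N n \<in> carrier A"
  using group.inn_auto[OF groupN] by blast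

lemma gam_in: "\<alpha> \<in> carrier A \<Longrightarrow> n \<in> carrier N \<Longrightarrow> gam \<alpha> n \<in> carrier A"
  unfolding gam_def using innN_in monoid.m_closed[OF A_monoid] by blast

lemma gam_Gam: assumes a: "\<alpha> \<in> carrier A" and n: "n \<in> carrier N"
  shows "gam \<alpha> n = Gam (psiN \<alpha> n) (sig \<alpha>)"
proof -
  have "gam \<alpha> n = compose (carrier N) (inn N n) \<alpha>"
    unfolding gam_def using Auto_mult[OF innN_in[OF n] a] .
  also have "\<dots> = Gam (psiN \<alpha> n) (sig \<alpha>)"
  proof (rule ext)
    fix x
    show "compose (carrier N) (inn N n) \<alpha> x = Gam (psiN \<alpha> n) (sig \<alpha>) x"
    proof (cases "x \<in> carrier N")
      case True
      have ax: "\<alpha> x \<in> carrier N" using auto_closed[OF a True] .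
      have "compose (carrier N) (inn N n) \<alpha> x = n \<otimes>\<^bsub>N\<^esub> \<alpha> x \<otimes>\<^bsub>N\<^esub> inv\<^bsub>N\<^esub> n"
        using True ax by (simp add: compose_eq group.inn_apply[OF groupN])
      also have "\<dots> = (\<lambda>j\<in>I. psiN \<alpha> n j (x (sig \<alpha> j)))"
      proof (rule ext)
        fix j show "(n \<otimes>\<^bsub>N\<^esub> \<alpha> x \<otimes>\<^bsub>N\<^esub> inv\<^bsub>N\<^esub> n) j = (\<lambda>j\<in>I. psiN \<alpha> n j (x (sig \<alpha> j))) j"
        proof (cases "j \<in> I")
          case True
          have sj: "sig \<alpha> j \<in> I" using sig_in[OF a True] .
          have xs: "x (sig \<alpha> j) \<in> carrier S" using memN[OF \<open>x \<in> carrier N\<close> sj] .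
          have aj: "\<alpha> x j = phi \<alpha> (sig \<alpha> j) (x (sig \<alpha> j))"
            using alpha_formula[OF a \<open>x \<in> carrier N\<close> sj] pi_sig[OF a True] by simp
          have "psiN \<alpha> n j (x (sig \<alpha> j)) = inn S (n j) (phi \<alpha> (sig \<alpha> j) (x (sig \<alpha> j)))"
            unfolding psiN_def using Auto_mult_apply[OF inn_auto[OF memN[OF n True]] phi_auto[OF a sj] xs] .
          also have "\<dots> = n j \<otimes> \<alpha> x j \<otimes> inv (n j)"
            using aj inn_apply Auto_closed[OF phi_auto[OF a sj] xs] by simp
          finally show ?thesis using True n by (simp add: multN_apply invN_apply)
        next
          case False thus ?thesis by (simp add: multN)
        qed
      qed
      finally show ?thesis using True by (simp add: Gam_def)
    next
      case False thus ?thesis by (simp add: Gam_def compose_def)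
    qed
  qed
  finally show ?thesis .
qed

lemma sig_period: assumes a: "\<alpha> \<in> carrier A" and q: "\<alpha> [^]\<^bsub>A\<^esub> (Q::nat) = \<one>\<^bsub>A\<^esub>" and j: "j \<in> I"
  shows "(sig \<alpha> ^^ Q) j = j"
proof (rule ccontr)
  assume ne: "(sig \<alpha> ^^ Q) j \<noteq> j"
  have si: "sig \<alpha> ` I \<subseteq> I" using sig_img[OF a] .
  have G: "Gam (psiA \<alpha>) (sig \<alpha>) \<in> carrier A" using a alpha_Gam[OF a] by simp
  have feq: "(\<lambda>x\<in>carrier N. \<lambda>j\<in>I. Phi (psiA \<alpha>) (sig \<alpha>) Q j (x ((sig \<alpha>^^Q) j))) = (\<lambda>x\<in>carrier N. x)"
    using Gam_pow[OF si psiA_in[OF a] G, of Q] q alpha_Gam[OF a] by (simp add: Auto_one)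
  define k where "k = (sig \<alpha> ^^ Q) j"
  have kI: "k \<in> I" unfolding k_def using funpow_in[OF si j] .
  have ec: "e k s0 \<in> carrier N" using e_carr[OF s0(1)] .
  have "(\<lambda>x\<in>carrier N. \<lambda>j\<in>I. Phi (psiA \<alpha>) (sig \<alpha>) Q j (x ((sig \<alpha>^^Q) j))) (e k s0) j = (\<lambda>x\<in>carrier N. x) (e k s0) j"
    using feq by simp
  hence "Phi (psiA \<alpha>) (sig \<alpha>) Q j s0 = \<one>"
    using ec j kI ne by (simp add: e_apply k_def)
  thus False using AS_one_iff[OF Phi_closed[OF si psiA_in[OF a] j] s0(1)] s0(2) by simp
qed

end

context setting begin

definition per :: "(nat \<Rightarrow> nat) \<Rightarrow> nat \<Rightarrow> nat" where
  "per \<sigma> r = (LEAST k. 0 < k \<and> (\<sigma>^^k) r = r)"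

definition roots :: "(nat \<Rightarrow> nat) \<Rightarrow> nat set" where
  "roots \<sigma> = {r \<in> I. \<forall>k. r \<le> (\<sigma>^^k) r}"

lemma funpow_comp: "(\<sigma>^^a) ((\<sigma>^^b) j) = (\<sigma>^^(a + b)) j"
  by (simp add: funpow_add)

lemma per_props: assumes "0 < Q" "(\<sigma>^^Q) j = j"
  shows "0 < per \<sigma> j" "(\<sigma>^^(per \<sigma> j)) j = j"
proof -
  have "0 < per \<sigma> j \<and> (\<sigma>^^(per \<sigma> j)) j = j"
    unfolding per_def by (rule LeastI[of _ Q]) (use assms in simp)
  thus "0 < per \<sigma> j" "(\<sigma>^^(per \<sigma> j)) j = j" by auto
qed

lemma per_min: "0 < k \<Longrightarrow> k < per \<sigma> j \<Longrightarrow> (\<sigma>^^k) j \<noteq> j"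
  unfolding per_def using not_less_Least by blast

lemma funpow_mod: assumes "(\<sigma>^^Q) j = j" shows "(\<sigma>^^n) j = (\<sigma>^^(n mod Q)) j"
proof -
  have "(\<sigma>^^(n mod Q)) ((\<sigma>^^((n div Q) * Q)) j) = (\<sigma>^^(n mod Q + (n div Q) * Q)) j"
    by (rule funpow_comp)
  also have "n mod Q + (n div Q) * Q = n" by simp
  finally show ?thesis using funpow_mult_fix[OF assms, of "n div Q"] by simp
qed

lemma per_dvd: assumes Q: "0 < Q" "(\<sigma>^^Q) j = j" shows "per \<sigma> j dvd Q"
proof -
  have p: "0 < per \<sigma> j" "(\<sigma>^^(per \<sigma> j)) j = j" using per_props[OF Q] by auto
  have "(\<sigma>^^(Q mod per \<sigma> j)) j = j" using funpow_mod[OF p(2), of Q] Q(2) by simp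
  hence "Q mod per \<sigma> j = 0" using per_min[of "Q mod per \<sigma> j" \<sigma> j] p(1) by (meson mod_less_divisor neq0_conv)
  thus ?thesis by (simp add: dvd_eq_mod_eq_0)
qed

lemma root_exists: assumes sI: "\<sigma> ` I \<subseteq> I" and Q: "0 < Q" and perQ: "\<And>i. i \<in> I \<Longrightarrow> (\<sigma>^^Q) i = i"
  and j: "j \<in> I"
  shows "\<exists>r\<in>roots \<sigma>. \<exists>k. j = (\<sigma>^^k) r"
proof -
  define Orb where "Orb = (\<lambda>k. (\<sigma>^^k) j) ` {..<Q}"
  have fO: "finite Orb" and neO: "Orb \<noteq> {}" using Q by (auto simp: Orb_def)
  define r where "r = Min Orb"
  have "r \<in> Orb" unfolding r_def using fO neO by (rule Min_in)
  then obtain k0 where k0: "k0 < Q" "r = (\<sigma>^^k0) j" by (auto simp: Orb_def)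
  have rI: "r \<in> I" using k0 funpow_in[OF sI j] by simp
  have "r \<le> (\<sigma>^^k) r" for k
  proof -
    have "(\<sigma>^^k) r = (\<sigma>^^(k + k0)) j" using k0 funpow_comp by simp
    also have "\<dots> = (\<sigma>^^((k + k0) mod Q)) j" using funpow_mod[OF perQ[OF j]] .
    finally have "(\<sigma>^^k) r \<in> Orb" using Q by (auto simp: Orb_def)
    thus ?thesis unfolding r_def using fO by simp
  qed
  hence "r \<in> roots \<sigma>" using rI by (simp add: roots_def)
  moreover have "j = (\<sigma>^^(Q - k0)) r"
  proof -
    have "(\<sigma>^^(Q - k0)) r = (\<sigma>^^(Q - k0 + k0)) j" by (simp only: k0(2) funpow_comp)
    also have "Q - k0 + k0 = Q" using k0 by simp
    finally show ?thesis using perQ[OF j] by simp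
  qed
  ultimately show ?thesis by blast
qed

lemma root_unique: assumes r: "r \<in> roots \<sigma>" and Q: "0 < Q" "(\<sigma>^^Q) r = r" and k: "0 < k" "k < per \<sigma> r"
  shows "(\<sigma>^^k) r \<notin> roots \<sigma>"
proof
  assume s: "(\<sigma>^^k) r \<in> roots \<sigma>"
  have p: "(\<sigma>^^(per \<sigma> r)) r = r" using per_props[OF Q] by auto
  have 1: "r \<le> (\<sigma>^^k) r" using r by (simp add: roots_def)
  have "(\<sigma>^^k) r \<le> (\<sigma>^^(per \<sigma> r - k)) ((\<sigma>^^k) r)" using s by (simp add: roots_def)
  also have "\<dots> = (\<sigma>^^(per \<sigma> r - k + k)) r" by (rule funpow_comp)
  also have "per \<sigma> r - k + k = per \<sigma> r" using k by simp
  finally have "(\<sigma>^^k) r \<le> r" using p by simp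
  hence "(\<sigma>^^k) r = r" using 1 by simp
  thus False using per_min[OF k] by simp
qed


end

context setting begin

lemma inn_mult: assumes g: "g \<in> carrier S" and h: "h \<in> carrier S"
  shows "inn S g \<otimes>\<^bsub>AS\<^esub> inn S h = inn S (g \<otimes> h)"
proof -
  have "inn S g \<otimes>\<^bsub>AS\<^esub> inn S h = compose (carrier S) (inn S g) (inn S h)"
    using Auto_mult[OF inn_auto[OF g] inn_auto[OF h]] .
  also have "\<dots> = inn S (g \<otimes> h)"
  proof (rule ext)
    fix x show "compose (carrier S) (inn S g) (inn S h) x = inn S (g \<otimes> h) x"
    proof (cases "x \<in> carrier S")
      case True thus ?thesis using g h by (simp add: compose_eq inn_apply inv_mult_group m_assoc)
    next
      case False thus ?thesis by (simp add: compose_def inn_def)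
    qed
  qed
  finally show ?thesis .
qed

lemma inn_one: "inn S \<one> = \<one>\<^bsub>AS\<^esub>"
  by (rule ext) (simp add: inn_def Auto_one)

lemma inn_inv: assumes g: "g \<in> carrier S" shows "inv\<^bsub>AS\<^esub> (inn S g) = inn S (inv g)"
proof (rule group.inv_equality[OF groupAS])
  show "inn S (inv g) \<otimes>\<^bsub>AS\<^esub> inn S g = \<one>\<^bsub>AS\<^esub>" using inn_mult[of "inv g" g] g by (simp add: inn_one)
  show "inn S g \<in> carrier AS" using inn_auto[OF g] .
  show "inn S (inv g) \<in> carrier AS" using inn_auto g by simp
qed

lemma auto_inn: assumes c: "c \<in> carrier AS" and h: "h \<in> carrier S"
  shows "c \<otimes>\<^bsub>AS\<^esub> inn S h = inn S (c h) \<otimes>\<^bsub>AS\<^esub> c"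
proof -
  have ch: "c h \<in> carrier S" using Auto_closed[OF c h] .
  have gh: "group_hom S S c" unfolding group_hom_def group_hom_axioms_def using is_group Auto_hom[OF c] by simp
  have "c \<otimes>\<^bsub>AS\<^esub> inn S h = compose (carrier S) c (inn S h)" using Auto_mult[OF c inn_auto[OF h]] .
  also have "\<dots> = compose (carrier S) (inn S (c h)) c"
  proof (rule ext)
    fix x show "compose (carrier S) c (inn S h) x = compose (carrier S) (inn S (c h)) c x"
    proof (cases "x \<in> carrier S")
      case True
      have cx: "c x \<in> carrier S" using Auto_closed[OF c True] .
      have "c (h \<otimes> x \<otimes> inv h) = c h \<otimes> c x \<otimes> inv (c h)"
        using True h group_hom.hom_mult[OF gh] group_hom.hom_inv[OF gh] by simp
      thus ?thesis using True h cx ch by (simp add: compose_eq inn_apply)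
    next
      case False thus ?thesis by (simp add: compose_def)
    qed
  qed
  also have "\<dots> = inn S (c h) \<otimes>\<^bsub>AS\<^esub> c" using Auto_mult[OF inn_auto[OF ch] c] by simp
  finally show ?thesis .
qed

lemma card_C:
  assumes hyp: "\<forall>\<alpha> \<in> carrier AS. \<exists>\<beta> \<in> Inn S #>\<^bsub>AS\<^esub> \<alpha>. p_element AS p \<beta> \<and> card (S_class S \<beta>) \<ge> M"
    and p: "Factorial_Ring.prime p" and c: "c \<in> carrier AS"
  shows "M \<le> card {g \<in> carrier S. p_element AS p (inn S g \<otimes>\<^bsub>AS\<^esub> c)}"
proof -
  interpret AS: group AS by (rule groupAS)
  define C where "C = {g \<in> carrier S. p_element AS p (inn S g \<otimes>\<^bsub>AS\<^esub> c)}"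
  obtain \<beta> where b: "\<beta> \<in> Inn S #>\<^bsub>AS\<^esub> c" "p_element AS p \<beta>" "card (S_class S \<beta>) \<ge> M"
    using hyp c by blast
  obtain b0 where b0: "b0 \<in> carrier S" "\<beta> = inn S b0 \<otimes>\<^bsub>AS\<^esub> c"
    using b(1) by (auto simp: r_coset_def Inn_def)
  have sub: "S_class S \<beta> \<subseteq> (\<lambda>g. inn S g \<otimes>\<^bsub>AS\<^esub> c) ` C"
  proof
    fix y assume "y \<in> S_class S \<beta>"
    then obtain g where g: "g \<in> carrier S" "y = inn S g \<otimes>\<^bsub>AS\<^esub> \<beta> \<otimes>\<^bsub>AS\<^esub> inv\<^bsub>AS\<^esub> (inn S g)"
      by (auto simp: S_class_def)
    have ig: "inv g \<in> carrier S" using g by simp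
    have cig: "c (inv g) \<in> carrier S" using Auto_closed[OF c ig] .
    have I1: "inn S g \<in> carrier AS" "inn S b0 \<in> carrier AS" "inn S (inv g) \<in> carrier AS"
      "inn S (c (inv g)) \<in> carrier AS" using inn_auto g b0 ig cig by auto
    have pe: "p_element AS p y" using AS.conj_p_element[OF I1(1) b(2) p] g(2) by simp
    have "y = inn S g \<otimes>\<^bsub>AS\<^esub> inn S b0 \<otimes>\<^bsub>AS\<^esub> (c \<otimes>\<^bsub>AS\<^esub> inn S (inv g))"
      using g(2) b0(2) inn_inv[OF g(1)] I1 c by (simp add: AS.m_assoc)
    also have "\<dots> = inn S g \<otimes>\<^bsub>AS\<^esub> inn S b0 \<otimes>\<^bsub>AS\<^esub> (inn S (c (inv g)) \<otimes>\<^bsub>AS\<^esub> c)"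
      using auto_inn[OF c ig] by simp
    also have "\<dots> = (inn S g \<otimes>\<^bsub>AS\<^esub> inn S b0 \<otimes>\<^bsub>AS\<^esub> inn S (c (inv g))) \<otimes>\<^bsub>AS\<^esub> c"
      using I1 c by (simp add: AS.m_assoc)
    also have "inn S g \<otimes>\<^bsub>AS\<^esub> inn S b0 \<otimes>\<^bsub>AS\<^esub> inn S (c (inv g)) = inn S (g \<otimes> b0 \<otimes> c (inv g))"
      using g b0 cig by (simp add: inn_mult)
    finally have ye: "y = inn S (g \<otimes> b0 \<otimes> c (inv g)) \<otimes>\<^bsub>AS\<^esub> c" .
    have "g \<otimes> b0 \<otimes> c (inv g) \<in> C" using pe ye g b0 cig by (simp add: C_def)
    thus "y \<in> (\<lambda>g. inn S g \<otimes>\<^bsub>AS\<^esub> c) ` C" using ye by blast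
  qed
  have fC: "finite C" using finS by (simp add: C_def)
  have "card (S_class S \<beta>) \<le> card ((\<lambda>g. inn S g \<otimes>\<^bsub>AS\<^esub> c) ` C)"
    using sub fC by (simp add: card_mono)
  also have "\<dots> \<le> card C" using card_image_le[OF fC] .
  finally show ?thesis using b(3) by (simp add: C_def)
qed

lemma M_le:
  assumes hyp: "\<forall>\<alpha> \<in> carrier AS. \<exists>\<beta> \<in> Inn S #>\<^bsub>AS\<^esub> \<alpha>. p_element AS p \<beta> \<and> card (S_class S \<beta>) \<ge> M"
  shows "M \<le> card (carrier S)"
proof -
  obtain \<beta> where b: "card (S_class S \<beta>) \<ge> M" using hyp AS_one_closed by blast
  have "S_class S \<beta> = (\<lambda>g. inn S g \<otimes>\<^bsub>AS\<^esub> \<beta> \<otimes>\<^bsub>AS\<^esub> inv\<^bsub>AS\<^esub> (inn S g)) ` carrier S"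
    by (auto simp: S_class_def)
  hence "card (S_class S \<beta>) \<le> card (carrier S)" using card_image_le[OF finS] by simp
  thus ?thesis using b by simp
qed

lemma Phi_cong: "(\<And>i. i < k \<Longrightarrow> \<psi> ((\<sigma>^^i) j) = \<psi>' ((\<sigma>^^i) j)) \<Longrightarrow> Phi \<psi> \<sigma> k j = Phi \<psi>' \<sigma> k j"
  by (induct k) auto

end

context setting begin

lemma sig_period_ex: assumes a: "\<alpha> \<in> carrier A" and p: "Factorial_Ring.prime p" and pa: "p_element A p \<alpha>"
  shows "\<exists>a0. \<alpha> [^]\<^bsub>A\<^esub> (p^a0::nat) = \<one>\<^bsub>A\<^esub> \<and> 0 < p^a0 \<and> (\<forall>j\<in>I. (sig \<alpha> ^^ (p^a0)) j = j)"
proof -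
  obtain a0 where a0: "\<alpha> [^]\<^bsub>A\<^esub> (p^a0::nat) = \<one>\<^bsub>A\<^esub>" using p_element_pow[OF groupA pa] by blast
  have "0 < p" using p by (simp add: prime_gt_0_nat)
  thus ?thesis using a0 sig_period[OF a a0] by auto
qed

lemma gam_pelem:
  assumes a: "\<alpha> \<in> carrier A" and p: "Factorial_Ring.prime p" and pa: "p_element A p \<alpha>"
    and n: "n \<in> carrier N"
    and B: "\<And>r. r \<in> roots (sig \<alpha>) \<Longrightarrow> p_element AS p (Phi (psiN \<alpha> n) (sig \<alpha>) (per (sig \<alpha>) r) r)"
  shows "p_element A p (gam \<alpha> n)"
proof -
  interpret AS: group AS by (rule groupAS)
  define \<sigma> where "\<sigma> = sig \<alpha>"
  define \<psi> where "\<psi> = psiN \<alpha> n"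
  have sI: "\<sigma> ` I \<subseteq> I" unfolding \<sigma>_def using sig_img[OF a] .
  have pI: "\<And>j. j \<in> I \<Longrightarrow> \<psi> j \<in> carrier AS" unfolding \<psi>_def using psiN_in[OF a] memN[OF n] by blast
  obtain a0 where a0: "0 < p^a0" "\<forall>j\<in>I. (\<sigma> ^^ (p^a0)) j = j"
    using sig_period_ex[OF a p pa] unfolding \<sigma>_def by blast
  define Q where "Q = p^a0"
  have Q0: "0 < Q" using a0 by (simp add: Q_def)
  have perQ: "\<And>j. j \<in> I \<Longrightarrow> (\<sigma>^^Q) j = j" using a0 by (simp add: Q_def)
  define B where "B r = Phi \<psi> \<sigma> (per \<sigma> r) r" for r
  have ex: "\<exists>k. B r [^]\<^bsub>AS\<^esub> (p^k::nat) = \<one>\<^bsub>AS\<^esub>" if "r \<in> roots \<sigma>" for r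
    using p_element_pow[OF groupAS B[OF that[unfolded \<sigma>_def]]] unfolding B_def \<psi>_def \<sigma>_def by simp
  define ee where "ee r = (SOME k. B r [^]\<^bsub>AS\<^esub> (p^k::nat) = \<one>\<^bsub>AS\<^esub>)" for r
  have ee: "B r [^]\<^bsub>AS\<^esub> (p^(ee r)::nat) = \<one>\<^bsub>AS\<^esub>" if "r \<in> roots \<sigma>" for r
    unfolding ee_def using ex[OF that] by (rule someI_ex)
  define E where "E = sum ee (roots \<sigma>)"
  have finR: "finite (roots \<sigma>)" by (rule finite_subset[of _ I]) (auto simp: roots_def)
  have eeE: "ee r \<le> E" if "r \<in> roots \<sigma>" for r
    unfolding E_def by (rule member_le_sum[OF that _ finR]) simp
  define q where "q = p^E * Q"
  have Bc: "r \<in> I \<Longrightarrow> B r \<in> carrier AS" for r unfolding B_def using Phi_closed[OF sI pI] .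
  have c1: "Phi \<psi> \<sigma> q r = \<one>\<^bsub>AS\<^esub>" if r: "r \<in> roots \<sigma>" for r
  proof -
    have rI: "r \<in> I" using r by (simp add: roots_def)
    obtain d where d: "Q = per \<sigma> r * d" using per_dvd[OF Q0 perQ[OF rI]] by (auto simp: dvd_def)
    have q_eq: "q = (p^E * d) * per \<sigma> r" using d by (simp add: q_def)
    have "Phi \<psi> \<sigma> q r = B r [^]\<^bsub>AS\<^esub> (p^E * d)"
      unfolding q_eq B_def using Phi_mult[OF sI pI rI per_props(2)[OF Q0 perQ[OF rI]]] .
    also have "\<dots> = \<one>\<^bsub>AS\<^esub>"
    proof -
      have "AS.ord (B r) dvd p^(ee r)" using ee[OF r] AS.pow_eq_id[OF Bc[OF rI]] by simp
      also have "p^(ee r) dvd p^E * d" using eeE[OF r] by (simp add: le_imp_power_dvd)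
      finally show ?thesis using AS.pow_eq_id[OF Bc[OF rI]] by simp
    qed
    finally show ?thesis .
  qed
  have perq: "(\<sigma>^^q) j = j" if "j \<in> I" for j unfolding q_def using funpow_mult_fix[OF perQ[OF that]] .
  have c2: "Phi \<psi> \<sigma> q j = \<one>\<^bsub>AS\<^esub>" if j: "j \<in> I" for j
  proof -
    obtain r k where r: "r \<in> roots \<sigma>" and k: "j = (\<sigma>^^k) r" using root_exists[OF sI Q0 perQ j] by blast
    have rI: "r \<in> I" using r by (simp add: roots_def)
    have "Phi \<psi> \<sigma> (q + k) r = Phi \<psi> \<sigma> q r \<otimes>\<^bsub>AS\<^esub> Phi \<psi> \<sigma> k ((\<sigma>^^q) r)" by (rule Phi_add[OF sI pI rI])
    also have "\<dots> = Phi \<psi> \<sigma> k r" using c1[OF r] perq[OF rI] Phi_closed[OF sI pI rI] by simp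
    finally have 1: "Phi \<psi> \<sigma> (q + k) r = Phi \<psi> \<sigma> k r" .
    have "Phi \<psi> \<sigma> (k + q) r = Phi \<psi> \<sigma> k r \<otimes>\<^bsub>AS\<^esub> Phi \<psi> \<sigma> q j" using Phi_add[OF sI pI rI, where a=k and b=q] k by simp
    hence "Phi \<psi> \<sigma> k r \<otimes>\<^bsub>AS\<^esub> Phi \<psi> \<sigma> q j = Phi \<psi> \<sigma> k r" using 1 by (simp add: add.commute)
    thus ?thesis using AS.l_cancel_one[OF Phi_closed[OF sI pI rI] Phi_closed[OF sI pI j]] by simp
  qed
  have G: "Gam \<psi> \<sigma> \<in> carrier A" using gam_in[OF a n] gam_Gam[OF a n] unfolding \<psi>_def \<sigma>_def by simp
  have "Gam \<psi> \<sigma> [^]\<^bsub>A\<^esub> q = \<one>\<^bsub>A\<^esub>" by (rule Gam_one[OF sI pI G c2 perq])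
  hence "gam \<alpha> n [^]\<^bsub>A\<^esub> (p^(E + a0)) = \<one>\<^bsub>A\<^esub>"
    using gam_Gam[OF a n] by (simp add: \<psi>_def \<sigma>_def q_def Q_def power_add)
  thus ?thesis using p_element_of_pow[OF groupA gam_in[OF a n] p] by blast
qed

end

context setting begin

lemma count_P:
  assumes a: "\<alpha> \<in> carrier A" and p: "Factorial_Ring.prime p" and pa: "p_element A p \<alpha>"
    and hyp: "\<forall>\<alpha> \<in> carrier AS. \<exists>\<beta> \<in> Inn S #>\<^bsub>AS\<^esub> \<alpha>. p_element AS p \<beta> \<and> card (S_class S \<beta>) \<ge> M"
  shows "M^t \<le> card {n \<in> carrier N. p_element A p (gam \<alpha> n)}"
proof -
  interpret AS: group AS by (rule groupAS)
  define \<sigma> where "\<sigma> = sig \<alpha>"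
  have sI: "\<sigma> ` I \<subseteq> I" unfolding \<sigma>_def using sig_img[OF a] .
  obtain a0 where a0: "0 < p^a0" "\<forall>j\<in>I. (\<sigma> ^^ (p^a0)) j = j"
    using sig_period_ex[OF a p pa] unfolding \<sigma>_def by blast
  define T where "T = roots \<sigma>"
  define F where "F = I - T"
  have TI: "T \<subseteq> I" by (auto simp: T_def roots_def)
  have finT: "finite T" using TI by (rule finite_subset) simp
  have finF: "finite F" by (simp add: F_def)
  define ext where "ext n' = (\<lambda>j\<in>I. if j \<in> T then \<one> else n' j)" for n' :: "nat \<Rightarrow> 'a"
  define cc where "cc r n' = phi \<alpha> (\<sigma> r) \<otimes>\<^bsub>AS\<^esub> Phi (psiN \<alpha> (ext n')) \<sigma> (per \<sigma> r - 1) (\<sigma> r)" for r n'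
  define C where "C n' r = {g \<in> carrier S. p_element AS p (inn S g \<otimes>\<^bsub>AS\<^esub> cc r n')}" for n' r
  define mrg where "mrg = (\<lambda>(n'::nat \<Rightarrow> 'a, g::nat \<Rightarrow> 'a). \<lambda>j\<in>I. if j \<in> T then g j else n' j)"
  define PF where "PF = (\<Pi>\<^sub>E j\<in>F. carrier S)"
  define Sg where "Sg = (SIGMA n':PF. \<Pi>\<^sub>E r\<in>T. C n' r)"
  define P where "P = {n \<in> carrier N. p_element A p (gam \<alpha> n)}"
  have ext_c: "ext n' j \<in> carrier S" if "n' \<in> PF" "j \<in> I" for n' j
    using that by (auto simp: ext_def PF_def F_def)
  have cc_c: "cc r n' \<in> carrier AS" if "n' \<in> PF" "r \<in> T" for n' r
  proof -
    have rI: "r \<in> I" using that TI by auto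
    have "\<sigma> r \<in> I" using sI rI by auto
    moreover have "\<And>j. j \<in> I \<Longrightarrow> psiN \<alpha> (ext n') j \<in> carrier AS"
      using psiN_in[OF a] ext_c[OF that(1)] unfolding \<sigma>_def by blast
    ultimately have ph: "phi \<alpha> (\<sigma> r) \<in> carrier AS" and Ph: "Phi (psiN \<alpha> (ext n')) \<sigma> (per \<sigma> r - 1) (\<sigma> r) \<in> carrier AS"
      using phi_auto[OF a] Phi_closed[OF sI] by (auto simp: \<sigma>_def)
    show ?thesis unfolding cc_def using ph Ph by simp
  qed
  have C_card: "M \<le> card (C n' r)" if "n' \<in> PF" "r \<in> T" for n' r
    unfolding C_def using card_C[OF hyp p cc_c[OF that]] .
  have C_sub: "C n' r \<subseteq> carrier S" for n' r by (auto simp: C_def)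
  have inj: "inj_on mrg Sg"
  proof (rule inj_onI)
    fix u v assume u: "u \<in> Sg" and v: "v \<in> Sg" and eq: "mrg u = mrg v"
    obtain n1 g1 where u': "u = (n1, g1)" "n1 \<in> PF" "g1 \<in> (\<Pi>\<^sub>E r\<in>T. C n1 r)" using u by (auto simp: Sg_def)
    obtain n2 g2 where v': "v = (n2, g2)" "n2 \<in> PF" "g2 \<in> (\<Pi>\<^sub>E r\<in>T. C n2 r)" using v by (auto simp: Sg_def)
    have e: "(if j \<in> T then g1 j else n1 j) = (if j \<in> T then g2 j else n2 j)" if j: "j \<in> I" for j
    proof -
      have "mrg u j = mrg v j" using eq by simp
      thus ?thesis using j by (simp add: mrg_def u'(1) v'(1))
    qed
    have "n1 = n2" using u'(2) v'(2) unfolding PF_def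
    proof (rule PiE_ext)
      fix i assume "i \<in> F" thus "n1 i = n2 i" using e[of i] by (auto simp: F_def)
    qed
    moreover have "g1 = g2"
    proof (rule extensionalityI)
      show "g1 \<in> extensional T" using u'(3) by (simp add: PiE_iff)
      show "g2 \<in> extensional T" using v'(3) by (simp add: PiE_iff)
      fix r assume r: "r \<in> T"
      thus "g1 r = g2 r" using e[of r] TI by auto
    qed
    ultimately show "u = v" using u'(1) v'(1) by simp
  qed
  have img: "mrg ` Sg \<subseteq> P"
  proof
    fix y assume "y \<in> mrg ` Sg"
    then obtain n' g where ng: "n' \<in> PF" "g \<in> (\<Pi>\<^sub>E r\<in>T. C n' r)" and y: "y = mrg (n', g)"
      by (auto simp: Sg_def)
    have gc: "g r \<in> carrier S" if "r \<in> T" for r using ng(2) that C_sub by auto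
    have yv: "y j = (if j \<in> T then g j else n' j)" if "j \<in> I" for j using y that by (simp add: mrg_def)
    have yc: "y \<in> carrier N" unfolding carrN
    proof (rule PiE_I)
      fix j assume j: "j \<in> I"
      show "y j \<in> carrier S" using yv[OF j] gc ng(1) j by (auto simp: PF_def F_def)
    next
      fix j assume "j \<notin> I" thus "y j = undefined" using y by (simp add: mrg_def)
    qed
    have B: "p_element AS p (Phi (psiN \<alpha> y) (sig \<alpha>) (per (sig \<alpha>) r) r)" if r: "r \<in> roots (sig \<alpha>)" for r
    proof -
      have rT: "r \<in> T" using r by (simp add: T_def \<sigma>_def)
      have rI: "r \<in> I" using rT TI by auto
      have pp: "0 < per \<sigma> r" using per_props(1)[OF a0(1) a0(2)[rule_format, OF rI]] .
      define m where "m = per \<sigma> r - 1"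
      have pm: "per \<sigma> r = 1 + m" using pp by (simp add: m_def)
      have pIy: "\<And>j. j \<in> I \<Longrightarrow> psiN \<alpha> y j \<in> carrier AS" using psiN_in[OF a] memN[OF yc] by blast
      have pIe: "\<And>j. j \<in> I \<Longrightarrow> psiN \<alpha> (ext n') j \<in> carrier AS" using psiN_in[OF a] ext_c[OF ng(1)] by blast
      have "Phi (psiN \<alpha> y) \<sigma> (per \<sigma> r) r = Phi (psiN \<alpha> y) \<sigma> 1 r \<otimes>\<^bsub>AS\<^esub> Phi (psiN \<alpha> y) \<sigma> m ((\<sigma>^^1) r)"
        unfolding pm by (rule Phi_add[OF sI pIy rI])
      also have "Phi (psiN \<alpha> y) \<sigma> 1 r = psiN \<alpha> y r" using pIy[OF rI] by simp
      also have "(\<sigma>^^1) r = \<sigma> r" by simp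
      also have "Phi (psiN \<alpha> y) \<sigma> m (\<sigma> r) = Phi (psiN \<alpha> (ext n')) \<sigma> m (\<sigma> r)"
      proof (rule Phi_cong)
        fix i assume i: "i < m"
        have eqi: "(\<sigma>^^i) (\<sigma> r) = (\<sigma>^^(Suc i)) r" by (simp add: funpow_Suc_right del: funpow.simps)
        have nT: "(\<sigma>^^(Suc i)) r \<notin> T" unfolding T_def
          using root_unique[of r \<sigma> "p^a0" "Suc i"] rT a0 rI i pm by (simp add: T_def)
        have iI: "(\<sigma>^^(Suc i)) r \<in> I" using funpow_in[OF sI rI] .
        have "y ((\<sigma>^^(Suc i)) r) = ext n' ((\<sigma>^^(Suc i)) r)" using yv[OF iI] nT iI by (simp add: ext_def)
        thus "psiN \<alpha> y ((\<sigma>^^i) (\<sigma> r)) = psiN \<alpha> (ext n') ((\<sigma>^^i) (\<sigma> r))"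
          unfolding eqi by (simp add: psiN_def)
      qed
      finally have "Phi (psiN \<alpha> y) \<sigma> (per \<sigma> r) r = psiN \<alpha> y r \<otimes>\<^bsub>AS\<^esub> Phi (psiN \<alpha> (ext n')) \<sigma> m (\<sigma> r)" .
      also have "\<dots> = inn S (g r) \<otimes>\<^bsub>AS\<^esub> cc r n'"
      proof -
        have sr: "\<sigma> r \<in> I" using sI rI by auto
        have "psiN \<alpha> y r = inn S (g r) \<otimes>\<^bsub>AS\<^esub> phi \<alpha> (\<sigma> r)" using yv[OF rI] rT by (simp add: psiN_def \<sigma>_def)
        moreover have "inn S (g r) \<in> carrier AS" using inn_auto[OF gc[OF rT]] .
        moreover have "phi \<alpha> (\<sigma> r) \<in> carrier AS" using phi_auto[OF a sr] .
        moreover have "Phi (psiN \<alpha> (ext n')) \<sigma> m (\<sigma> r) \<in> carrier AS" using Phi_closed[OF sI pIe[unfolded \<sigma>_def] sr] by (simp add: \<sigma>_def)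
        ultimately show ?thesis by (simp add: cc_def m_def AS.m_assoc)
      qed
      finally have "Phi (psiN \<alpha> y) (sig \<alpha>) (per (sig \<alpha>) r) r = inn S (g r) \<otimes>\<^bsub>AS\<^esub> cc r n'"
        by (simp add: \<sigma>_def)
      moreover have "g r \<in> C n' r" using ng(2) rT by auto
      ultimately show ?thesis by (simp add: C_def)
    qed
    have "p_element A p (gam \<alpha> y)" using gam_pelem[OF a p pa yc B] by simp
    thus "y \<in> P" using yc by (simp add: P_def)
  qed
  have finP: "finite P"
  proof -
    have "finite (carrier N)" using finS by (simp add: carrN finite_PiE)
    thus ?thesis by (rule finite_subset[rotated]) (auto simp: P_def)
  qed
  have cSP: "card Sg \<le> card P" using card_inj_on_le[OF inj img finP] .
  have finPF: "finite PF" using finS finF by (simp add: PF_def finite_PiE)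
  have finCr: "finite (C n' r)" for n' r by (rule finite_subset[OF C_sub finS])
  have finC: "\<forall>n'\<in>PF. finite (\<Pi>\<^sub>E r\<in>T. C n' r)"
  proof
    fix n' show "finite (\<Pi>\<^sub>E r\<in>T. C n' r)" using finT by (rule finite_PiE) (rule finCr)
  qed
  have "card Sg = (\<Sum>n'\<in>PF. card (\<Pi>\<^sub>E r\<in>T. C n' r))" unfolding Sg_def using finPF finC by simp
  also have "\<dots> = (\<Sum>n'\<in>PF. \<Prod>r\<in>T. card (C n' r))" using finT by (simp add: card_PiE)
  also have "\<dots> \<ge> card PF * M^(card T)"
  proof -
    have "M^(card T) \<le> (\<Prod>r\<in>T. card (C n' r))" if "n' \<in> PF" for n'
    proof -
      have "(\<Prod>r\<in>T. M) \<le> (\<Prod>r\<in>T. card (C n' r))" by (rule prod_mono) (use C_card[OF that] in simp)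
      thus ?thesis by simp
    qed
    thus ?thesis using sum_bounded_below[of PF "M^(card T)" "\<lambda>n'. \<Prod>r\<in>T. card (C n' r)"] by simp
  qed
  finally have c1: "card PF * M^(card T) \<le> card Sg" .
  have "card PF = card (carrier S) ^ card F" using finF by (simp add: PF_def card_PiE)
  moreover have "M ^ card F \<le> card (carrier S) ^ card F" using M_le[OF hyp] by (simp add: power_mono)
  ultimately have c2: "M ^ card F * M ^ card T \<le> card PF * M^(card T)" by simp
  have "card T \<le> card I" using TI by (rule card_mono[rotated]) simp
  hence ct: "card F + card T = t" using finT TI by (simp add: F_def card_Diff_subset)
  have "M^t = M ^ card F * M ^ card T" unfolding ct[symmetric] by (rule power_add)
  also have "\<dots> \<le> card PF * M^(card T)" by (rule c2)
  also have "\<dots> \<le> card Sg" by (rule c1)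
  finally have "M^t \<le> card Sg" .
  thus ?thesis using cSP by (simp add: P_def)
qed

end

context setting begin

lemma conj_eq_imp: assumes a: "a \<in> carrier S" and b: "b \<in> carrier S"
  and h: "\<And>z. z \<in> carrier S \<Longrightarrow> a \<otimes> z \<otimes> inv a = b \<otimes> z \<otimes> inv b"
  shows "a = b"
proof -
  have c: "inv b \<otimes> a \<in> carrier S" using a b by simp
  have "(inv b \<otimes> a) \<otimes> z = z \<otimes> (inv b \<otimes> a)" if z: "z \<in> carrier S" for z
  proof -
    have "(inv b \<otimes> a) \<otimes> z = inv b \<otimes> (a \<otimes> z \<otimes> inv a) \<otimes> a" using z a b by (simp add: m_assoc)
    also have "\<dots> = inv b \<otimes> (b \<otimes> z \<otimes> inv b) \<otimes> a" using h[OF z] by simp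
    also have "\<dots> = z \<otimes> (inv b \<otimes> a)" using z a b by (simp add: m_assoc cancel1)
    finally show ?thesis .
  qed
  hence "inv b \<otimes> a = \<one>" using central_one[OF c] by blast
  hence "b \<otimes> (inv b \<otimes> a) = b" using b by simp
  thus "a = b" using a b by (simp add: cancel2)
qed

lemma innN_inj: assumes n: "n \<in> carrier N" and n': "n' \<in> carrier N" and eq: "inn N n = inn N n'"
  shows "n = n'"
proof (rule eqN[OF n n'])
  fix j assume j: "j \<in> I"
  show "n j = n' j"
  proof (rule conj_eq_imp[OF memN[OF n j] memN[OF n' j]])
    fix z assume z: "z \<in> carrier S"
    have ez: "e j z \<in> carrier N" using e_carr[OF z] .
    have "inn N n (e j z) j = inn N n' (e j z) j" using eq by simp
    thus "n j \<otimes> z \<otimes> inv (n j) = n' j \<otimes> z \<otimes> inv (n' j)"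
      using j n n' ez by (simp add: group.inn_apply[OF groupN] multN_apply invN_apply e_apply)
  qed
qed

lemma gam_inj: assumes a: "\<alpha> \<in> carrier A" shows "inj_on (gam \<alpha>) (carrier N)"
proof (rule inj_onI)
  fix n n' assume n: "n \<in> carrier N" and n': "n' \<in> carrier N" and eq: "gam \<alpha> n = gam \<alpha> n'"
  have "inn N n = inn N n'"
    using eq group.right_cancel[OF groupA a innN_in[OF n] innN_in[OF n']] by (simp add: gam_def)
  thus "n = n'" using innN_inj[OF n n'] by simp
qed

lemma finN: "finite (carrier N)" using finS by (simp add: carrN finite_PiE)

lemma finA: "finite (carrier A)"
proof -
  have "carrier A \<subseteq> (\<Pi>\<^sub>E x\<in>carrier N. carrier N)"
  proof
    fix f assume f: "f \<in> carrier A"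
    have "f \<in> extensional (carrier N)" using Auto_ext[OF f] .
    moreover have "\<forall>x\<in>carrier N. f x \<in> carrier N" using Auto_closed[OF f] by blast
    ultimately show "f \<in> (\<Pi>\<^sub>E x\<in>carrier N. carrier N)" by (simp add: PiE_iff)
  qed
  moreover have "finite (\<Pi>\<^sub>E x\<in>carrier N. carrier N)" using finN by (simp add: finite_PiE)
  ultimately show ?thesis by (rule finite_subset)
qed

lemma main_bound:
  assumes p: "Factorial_Ring.prime p" and pa: "p_element A p \<alpha>"
    and hyp: "\<forall>\<alpha> \<in> carrier AS. \<exists>\<beta> \<in> Inn S #>\<^bsub>AS\<^esub> \<alpha>. p_element AS p \<beta> \<and> card (S_class S \<beta>) \<ge> M"
  shows "M^t \<le> card (Ord_p A (Inn N #>\<^bsub>A\<^esub> \<alpha>) p)"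
proof -
  have a: "\<alpha> \<in> carrier A" using pa by (simp add: p_element_def)
  define P where "P = {n \<in> carrier N. p_element A p (gam \<alpha> n)}"
  have "M^t \<le> card P" unfolding P_def by (rule count_P[OF a p pa hyp])
  also have "card P \<le> card (Ord_p A (Inn N #>\<^bsub>A\<^esub> \<alpha>) p)"
  proof (rule card_inj_on_le)
    show "inj_on (gam \<alpha>) P" using gam_inj[OF a] by (rule inj_on_subset) (auto simp: P_def)
    show "gam \<alpha> ` P \<subseteq> Ord_p A (Inn N #>\<^bsub>A\<^esub> \<alpha>) p"
    proof
      fix y assume "y \<in> gam \<alpha> ` P"
      then obtain n where n: "n \<in> carrier N" "p_element A p (gam \<alpha> n)" "y = gam \<alpha> n" by (auto simp: P_def)
      have "y \<in> Inn N #>\<^bsub>A\<^esub> \<alpha>" using n by (auto simp: r_coset_def Inn_def gam_def)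
      thus "y \<in> Ord_p A (Inn N #>\<^bsub>A\<^esub> \<alpha>) p" using n by (simp add: Ord_p_def)
    qed
    have "Ord_p A (Inn N #>\<^bsub>A\<^esub> \<alpha>) p \<subseteq> carrier A" by (auto simp: Ord_p_def p_element_def)
    thus "finite (Ord_p A (Inn N #>\<^bsub>A\<^esub> \<alpha>) p)" using finA by (rule finite_subset)
  qed
  finally show ?thesis .
qed

lemma final_bound:
  assumes p: "Factorial_Ring.prime p"
    and hyp: "\<forall>\<alpha> \<in> carrier AS. \<exists>\<beta> \<in> Inn S #>\<^bsub>AS\<^esub> \<alpha>. p_element AS p \<beta> \<and> card (S_class S \<beta>) \<ge> M"
  shows "M ^ t \<le> f_p p N"
proof -
  define Vals where "Vals = {card (Ord_p A (Inn N #>\<^bsub>A\<^esub> \<alpha>) p) | \<alpha>. p_element A p \<alpha>}"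
  have Vals: "Vals = (\<lambda>\<alpha>. card (Ord_p A (Inn N #>\<^bsub>A\<^esub> \<alpha>) p)) ` {\<alpha>. p_element A p \<alpha>}"
    by (auto simp: Vals_def)
  have "{\<alpha>. p_element A p \<alpha>} \<subseteq> carrier A" by (auto simp: p_element_def)
  hence "finite {\<alpha>. p_element A p \<alpha>}" using finA by (rule finite_subset)
  hence finV: "finite Vals" using Vals by simp
  have "p_element A p \<one>\<^bsub>A\<^esub>"
    using p_element_of_pow[OF groupA monoid.one_closed[OF A_monoid] p, of 0]
      monoid.l_one[OF A_monoid monoid.one_closed[OF A_monoid]] by simp
  hence neV: "Vals \<noteq> {}" by (auto simp: Vals_def)
  have "\<forall>x\<in>Vals. M^t \<le> x" using main_bound[OF p _ hyp] by (auto simp: Vals_def)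
  hence "M^t \<le> Min Vals" using finV neV by simp
  thus ?thesis by (simp add: f_p_def Vals_def)
qed

end

theorem lemma2p2:
  fixes S :: "'a monoid" and t :: nat and p :: nat and M :: nat
  assumes "simple_group S"
    and "finite (carrier S)"
    and "\<not> comm_group S"
    and "t > 0"
    and "Factorial_Ring.prime p"
    and "\<forall>\<alpha> \<in> carrier (AutoGroup S). \<exists>\<beta> \<in> Inn S #>\<^bsub>AutoGroup S\<^esub> \<alpha>.
           p_element (AutoGroup S) p \<beta> \<and> card (S_class S \<beta>) \<ge> M"
  shows "M ^ t \<le> f_p p (power_group S t)"
  using setting.final_bound[OF setting.intro[OF assms(1,2,3)] assms(5,6)] .

end
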